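(* Let $m\ge 1$ and let $X\subset \sqrt{m}\,\mathbb{S}^{m-1}=\{\bm{x}\in\mathbb{R}^m:\bm{x}\cdot\bm{x}=m\}$ be a spherical $2$-design with $|X|=n$ which is an $s$-distance set and whose degree $S$ equals $s$. Let $F_0,\dots,F_s$ be its projection matrices, let $m_s(\bm{x})=n(F_s)_{\bm{x},\bm{x}}$ for $\bm{x}\in X$, and let $q_s$ be the predegree polynomial of degree $s$ of $X$. Then \[ \mathrm{tr}\, F_s=\frac{1}{n}\sum_{\bm{x}\in X} m_s(\bm{x})\le q_s(m), \] and equality holds if and only if $X$ has the structure of a $Q$-polynomial association scheme with respect to the idempotents $F_0,\dots,F_s$.
   Context: Setting: $\bm{x}\cdot\bm{y}$ is the standard inner product on $\mathbb{R}^m$; $X$ is a finite subset of $\sqrt{m}\,\mathbb{S}^{m-1}$ with $n=|X|$. Put $A(X)=\{\bm{x}\cdot\bm{y}:\bm{x},\bm{y}\in X,\ \bm{x}\ne\bm{y}\}$ and $A'(X)=A(X)\cup\{m\}$; $X$ is an $s$-distance set if $|A(X)|=s$. $X$ is a spherical $2$-design if the average of every polynomial of degree at most $2$ over $X$ equals its average over the sphere with respect to the Lebesgue measure (equivalently, $\sum_{\bm{y}\in X}\bm{x}\cdot\bm{y}=0$ and $\frac1n\sum_{\bm{z}\in X}(\bm{x}\cdot\bm{z})(\bm{z}\cdot\bm{y})=\bm{x}\cdot\bm{y}$ for all $\bm{x},\bm{y}\in X$). Functions: $C(X)$ is the space of real functions on $X$ with inner product $(f,g)=\frac1n\sum_{\bm{x}\in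 X}f(\bm{x})g(\bm{x})$. For $p\in\mathbb{R}[t]$ and $\bm{a}\in X$, $\zeta_{\bm{a}}(p)(\bm{x})=p(\bm{a}\cdot\bm{x})$. $\mathrm{Pol}_0(X)$ = constant functions; $\mathrm{Pol}_1(X)=\mathrm{Span}\{\zeta_{\bm a}(p):\bm a\in X,\deg p\le 1\}$; $\mathrm{Pol}_k(X)=\mathrm{Span}\{fg: f\in\mathrm{Pol}_1(X), g\in\mathrm{Pol}_{k-1}(X)\}$ for $k\ge2$ (equivalently $\mathrm{Pol}_k(X)=\mathrm{Span}\{\zeta_{\bm a}(p):\bm a\in X,\deg p\le k\}$). The degree of $X$ is $S=\min\{i:\mathrm{Pol}_i(X)=C(X)\}$. $\mathrm{Harm}_0(X)=\mathrm{Pol}_0(X)$ and $\mathrm{Harm}_k(X)=\mathrm{Pol}_k(X)\cap\mathrm{Pol}_{k-1}(X)^\perp$ for $k\ge1$. Matrices $M$ indexed by $X\times X$ act on $C(X)$ by $(Mf)(\bm x)=\sum_{\bm y}M_{\bm x,\bm y}f(\bm y)$; $F_i$ ($0\le i\le S$) is the matrix of the orthogonal projection of $C(X)$ onto $\mathrm{Harm}_i(X)$ (the projection matrices of $X$). Gram matrix and polynomials: $G=\frac1n(\bm x\cdot\bm y)_{\bm x,\bm y\in X}$. For a matrix $M$ and $p\in\mathbb{R}[t]$, $p(M^\circ)$ is the matrix obtained by applying $p$ entrywise. For $\alpha\in A'(X)$, $\kappa_\alpha=|\{(\bm x,\bm y)\in X^2:\bm x\cdot\bm y=\alpha\}|$.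 On $\mathbb{R}[t]/(\prod_{\alpha\in A'(X)}(t-\alpha))$ define $\langle p,q\rangle=\frac1{n^2}\sum_{\alpha\in A'(X)}\kappa_\alpha p(\alpha)q(\alpha)$. The predegree polynomials $q_0,\dots,q_s$ of $X$ are the polynomials with $\deg q_k=k$ and $\langle q_k,q_h\rangle=\delta_{k,h}q_k(m)$. Association schemes: for $\alpha\in A'(X)$ let $R_\alpha=\{(\bm x,\bm y)\in X^2:\bm x\cdot\bm y=\alpha\}$. "$X$ has the structure of a $Q$-polynomial association scheme with respect to the idempotents $F_0,\dots,F_s$" means: $(X,\{R_\alpha\}_{\alpha\in A'(X)})$ is a symmetric association scheme (its adjacency matrices span an algebra closed under matrix multiplication, with the usual axioms), its primitive idempotents are $F_0,\dots,F_s$, and for each $i$ there is a polynomial $v_i^*$ of degree $i$ with $nF_i=v_i^*((nF_1)^\circ)$. *)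

theory Defs
  imports "HOL-Analysis.Analysis" "HOL-Computational_Algebra.Polynomial"
begin

text \<open>Points are vectors of type real^'m, so m = CARD('m) >= 1.
  Functions in C(X) are functions real^'m => real vanishing outside X;
  matrices indexed by X x X are functions of two arguments vanishing outside X x X.\<close>

definition inner_set :: "(real^'m) set \<Rightarrow> real set" where
  "inner_set X = {x \<bullet> y | x y. x \<in> X \<and> y \<in> X \<and> x \<noteq> y}"

definition inner_set' :: "(real^'m) set \<Rightarrow> real set" where
  "inner_set' X = insert (real CARD('m)) (inner_set X)"

definition spherical_2_design :: "(real^'m) set \<Rightarrow> bool" where
  "spherical_2_design X \<longleftrightarrow>
     (\<forall>x\<in>X. (\<Sum>y\<in>X. x \<bullet> y) = 0) \<and>
     (\<forall>x\<in>X. \<forall>y\<in>X. (\<Sum>z\<in>X. (x \<bullet> z) * (z \<bullet> y)) / real (card X) = x \<bullet> y)"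

definition CX :: "(real^'m) set \<Rightarrow> (real^'m \<Rightarrow> real) set" where
  "CX X = {f. \<forall>x. x \<notin> X \<longrightarrow> f x = 0}"

definition ipX :: "(real^'m) set \<Rightarrow> (real^'m \<Rightarrow> real) \<Rightarrow> (real^'m \<Rightarrow> real) \<Rightarrow> real" where
  "ipX X f g = (\<Sum>x\<in>X. f x * g x) / real (card X)"

text \<open>Pol_k(X) = span of the functions zeta_a(p), a in X, deg p <= k (restricted to X).
  A finite linear combination of such functions can be grouped by the point a, and
  a linear combination of polynomials of degree <= k has degree <= k, so the span
  is exactly the set below.\<close>
definition PolX :: "(real^'m) set \<Rightarrow> nat \<Rightarrow> (real^'m \<Rightarrow> real) set" where
  "PolX X k = {f. \<exists>p :: real^'m \<Rightarrow> real poly. (\<forall>a. degree (p a) \<le> k) \<and>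
       (\<forall>x. f x = (if x \<in> X then (\<Sum>a\<in>X. poly (p a) (a \<bullet> x)) else 0))}"

definition HarmX :: "(real^'m) set \<Rightarrow> nat \<Rightarrow> (real^'m \<Rightarrow> real) set" where
  "HarmX X k = (if k = 0 then PolX X 0
     else PolX X k \<inter> {f. \<forall>g\<in>PolX X (k - 1). ipX X f g = 0})"

definition design_degree :: "(real^'m) set \<Rightarrow> nat" where
  "design_degree X = (LEAST i. PolX X i = CX X)"

definition mat_app :: "(real^'m) set \<Rightarrow> (real^'m \<Rightarrow> real^'m \<Rightarrow> real) \<Rightarrow> (real^'m \<Rightarrow> real) \<Rightarrow> (real^'m \<Rightarrow> real)" where
  "mat_app X M f = (\<lambda>x. if x \<in> X then (\<Sum>y\<in>X. M x y * f y) else 0)"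

definition mat_mult :: "(real^'m) set \<Rightarrow> (real^'m \<Rightarrow> real^'m \<Rightarrow> real) \<Rightarrow> (real^'m \<Rightarrow> real^'m \<Rightarrow> real) \<Rightarrow> (real^'m \<Rightarrow> real^'m \<Rightarrow> real)" where
  "mat_mult X M N = (\<lambda>x y. \<Sum>z\<in>X. M x z * N z y)"

definition is_matX :: "(real^'m) set \<Rightarrow> (real^'m \<Rightarrow> real^'m \<Rightarrow> real) \<Rightarrow> bool" where
  "is_matX X M \<longleftrightarrow> (\<forall>x y. x \<notin> X \<or> y \<notin> X \<longrightarrow> M x y = 0)"

definition proj_matrix :: "(real^'m) set \<Rightarrow> (real^'m \<Rightarrow> real) set \<Rightarrow> (real^'m \<Rightarrow> real^'m \<Rightarrow> real)" where
  "proj_matrix X V = (THE M. is_matX X M \<and>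
     (\<forall>f\<in>CX X. mat_app X M f \<in> V \<and>
        (\<forall>g\<in>V. ipX X (\<lambda>x. f x - mat_app X M f x) g = 0)))"

definition projF :: "(real^'m) set \<Rightarrow> nat \<Rightarrow> (real^'m \<Rightarrow> real^'m \<Rightarrow> real)" where
  "projF X i = proj_matrix X (HarmX X i)"

definition traceX :: "(real^'m) set \<Rightarrow> (real^'m \<Rightarrow> real^'m \<Rightarrow> real) \<Rightarrow> real" where
  "traceX X M = (\<Sum>x\<in>X. M x x)"

definition kappa :: "(real^'m) set \<Rightarrow> real \<Rightarrow> nat" where
  "kappa X \<alpha> = card {(x, y). x \<in> X \<and> y \<in> X \<and> x \<bullet> y = \<alpha>}"

definition pred_ip :: "(real^'m) set \<Rightarrow> real poly \<Rightarrow> real poly \<Rightarrow> real" where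
  "pred_ip X p q = (\<Sum>\<alpha>\<in>inner_set' X. real (kappa X \<alpha>) * poly p \<alpha> * poly q \<alpha>) / (real (card X))\<^sup>2"

definition predegree_polys :: "(real^'m) set \<Rightarrow> nat \<Rightarrow> (nat \<Rightarrow> real poly) \<Rightarrow> bool" where
  "predegree_polys X s q \<longleftrightarrow>
     (\<forall>k\<le>s. q k \<noteq> 0 \<and> degree (q k) = k) \<and>
     (\<forall>k\<le>s. \<forall>h\<le>s. pred_ip X (q k) (q h) = (if k = h then poly (q k) (real CARD('m)) else 0))"

definition adjX :: "(real^'m) set \<Rightarrow> real \<Rightarrow> (real^'m \<Rightarrow> real^'m \<Rightarrow> real)" where
  "adjX X \<alpha> = (\<lambda>x y. if x \<in> X \<and> y \<in> X \<and> x \<bullet> y = \<alpha> then 1 else 0)"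

definition bose_mesner :: "(real^'m) set \<Rightarrow> (real^'m \<Rightarrow> real^'m \<Rightarrow> real) set" where
  "bose_mesner X = {M. \<exists>c. \<forall>x y. M x y = (\<Sum>\<alpha>\<in>inner_set' X. c \<alpha> * adjX X \<alpha> x y)}"

definition sym_assoc_scheme :: "(real^'m) set \<Rightarrow> bool" where
  "sym_assoc_scheme X \<longleftrightarrow>
     (\<forall>x y. adjX X (real CARD('m)) x y = (if x \<in> X \<and> y \<in> X \<and> x = y then 1 else 0)) \<and>
     (\<forall>\<alpha>\<in>inner_set' X. \<exists>x\<in>X. \<exists>y\<in>X. x \<bullet> y = \<alpha>) \<and>
     (\<forall>x\<in>X. \<forall>y\<in>X. \<exists>!\<alpha>. \<alpha> \<in> inner_set' X \<and> x \<bullet> y = \<alpha>) \<and>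
     (\<forall>\<alpha>\<in>inner_set' X. \<forall>x y. adjX X \<alpha> x y = adjX X \<alpha> y x) \<and>
     (\<forall>\<alpha>\<in>inner_set' X. \<forall>\<beta>\<in>inner_set' X. mat_mult X (adjX X \<alpha>) (adjX X \<beta>) \<in> bose_mesner X)"

definition zero_matX :: "(real^'m) set \<Rightarrow> (real^'m \<Rightarrow> real^'m \<Rightarrow> real) \<Rightarrow> bool" where
  "zero_matX X M \<longleftrightarrow> (\<forall>x\<in>X. \<forall>y\<in>X. M x y = 0)"

definition idempotent_BM :: "(real^'m) set \<Rightarrow> (real^'m \<Rightarrow> real^'m \<Rightarrow> real) \<Rightarrow> bool" where
  "idempotent_BM X E \<longleftrightarrow> E \<in> bose_mesner X \<and> \<not> zero_matX X E \<and> mat_mult X E E = E"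

definition primitive_idempotent :: "(real^'m) set \<Rightarrow> (real^'m \<Rightarrow> real^'m \<Rightarrow> real) \<Rightarrow> bool" where
  "primitive_idempotent X E \<longleftrightarrow> idempotent_BM X E \<and>
     \<not> (\<exists>E1 E2. idempotent_BM X E1 \<and> idempotent_BM X E2 \<and> zero_matX X (mat_mult X E1 E2) \<and>
           E = (\<lambda>x y. E1 x y + E2 x y))"

definition Q_polynomial_scheme :: "(real^'m) set \<Rightarrow> nat \<Rightarrow> bool" where
  "Q_polynomial_scheme X s \<longleftrightarrow> sym_assoc_scheme X \<and>
     {projF X i | i. i \<le> s} = {E. primitive_idempotent X E} \<and>
     (\<forall>i\<le>s. \<exists>v :: real poly. v \<noteq> 0 \<and> degree v = i \<and>
        (\<forall>x\<in>X. \<forall>y\<in>X. real (card X) * projF X i x y = poly v (real (card X) * projF X 1 x y)))"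

end

theory Submission
  imports Defs
begin


definition dotX :: "(real^'m) set \<Rightarrow> (real^'m \<Rightarrow> real) \<Rightarrow> (real^'m \<Rightarrow> real) \<Rightarrow> real" where
  "dotX X f g = (\<Sum>x\<in>X. f x * g x)"

definition restr :: "(real^'m) set \<Rightarrow> (real^'m \<Rightarrow> real) \<Rightarrow> (real^'m \<Rightarrow> real)" where
  "restr X f = (\<lambda>x. if x \<in> X then f x else 0)"

definition spanI :: "(real^'m) set \<Rightarrow> 'i set \<Rightarrow> ('i \<Rightarrow> real^'m \<Rightarrow> real) \<Rightarrow> (real^'m \<Rightarrow> real) set" where
  "spanI X I G = {f. \<exists>c. f = restr X (\<lambda>x. \<Sum>i\<in>I. c i * G i x)}"

definition isproj :: "(real^'m) set \<Rightarrow> (real^'m \<Rightarrow> real) set \<Rightarrow> (real^'m \<Rightarrow> real^'m \<Rightarrow> real) \<Rightarrow> bool" where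
  "isproj X V P \<longleftrightarrow> is_matX X P \<and> (\<forall>x y. P x y = P y x) \<and>
    (\<forall>f\<in>CX X. mat_app X P f \<in> V \<and> (\<forall>g\<in>V. dotX X (\<lambda>x. f x - mat_app X P f x) g = 0))"

lemma dotX_comm: "dotX X f g = dotX X g f"
  unfolding dotX_def by (simp add: mult.commute)

lemma dotX_add_left: "dotX X (\<lambda>x. f x + g x) h = dotX X f h + dotX X g h"
  unfolding dotX_def by (simp add: algebra_simps sum.distrib)
lemma dotX_diff_left: "dotX X (\<lambda>x. f x - g x) h = dotX X f h - dotX X g h"
  unfolding dotX_def by (simp add: algebra_simps sum_subtractf)
lemma dotX_scale_left: "dotX X (\<lambda>x. a * f x) h = a * dotX X f h"
  unfolding dotX_def by (simp add: algebra_simps sum_distrib_left)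
lemma dotX_add_right: "dotX X h (\<lambda>x. f x + g x) = dotX X h f + dotX X h g"
  unfolding dotX_def by (simp add: algebra_simps sum.distrib)
lemma dotX_diff_right: "dotX X h (\<lambda>x. f x - g x) = dotX X h f - dotX X h g"
  unfolding dotX_def by (simp add: algebra_simps sum_subtractf)
lemma dotX_scale_right: "dotX X h (\<lambda>x. a * f x) = a * dotX X h f"
  unfolding dotX_def by (simp add: algebra_simps sum_distrib_left)

lemma dotX_self_zero:
  assumes "finite X" "dotX X f f = 0" "x \<in> X" shows "f x = 0"
proof -
  have "\<forall>x\<in>X. f x * f x = 0"
    using sum_nonneg_eq_0_iff[of X "\<lambda>x. f x * f x"] assms(1,2) unfolding dotX_def by auto
  thus ?thesis using assms(3) by auto
qed

lemma dotX_self_nonneg: "dotX X f f \<ge> 0"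
  unfolding dotX_def by (auto intro: sum_nonneg)

lemma CX_eqI: "f \<in> CX X \<Longrightarrow> g \<in> CX X \<Longrightarrow> (\<And>x. x \<in> X \<Longrightarrow> f x = g x) \<Longrightarrow> f = g"
  unfolding CX_def by (rule ext) (case_tac "x \<in> X", auto)

lemma mat_app_CX: "mat_app X M f \<in> CX X"
  unfolding CX_def mat_app_def by auto

lemma restr_CX: "restr X f \<in> CX X"
  unfolding CX_def restr_def by auto

lemma spanI_CX: "spanI X I G \<subseteq> CX X"
  unfolding spanI_def using restr_CX by blast

lemma spanI_zero: "(\<lambda>x. 0) \<in> spanI X I G"
  unfolding spanI_def restr_def by (rule CollectI, rule exI[of _ "\<lambda>_. 0"]) auto

lemma spanI_add: "f \<in> spanI X I G \<Longrightarrow> g \<in> spanI X I G \<Longrightarrow> (\<lambda>x. f x + g x) \<in> spanI X I G"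
proof -
  assume "f \<in> spanI X I G" "g \<in> spanI X I G"
  then obtain c d where "f = restr X (\<lambda>x. \<Sum>i\<in>I. c i * G i x)" "g = restr X (\<lambda>x. \<Sum>i\<in>I. d i * G i x)"
    unfolding spanI_def by blast
  thus ?thesis unfolding spanI_def
    by (intro CollectI exI[of _ "\<lambda>i. c i + d i"]) (auto simp: restr_def algebra_simps sum.distrib)
qed

lemma spanI_scale: "f \<in> spanI X I G \<Longrightarrow> (\<lambda>x. a * f x) \<in> spanI X I G"
proof -
  assume "f \<in> spanI X I G"
  then obtain c where "f = restr X (\<lambda>x. \<Sum>i\<in>I. c i * G i x)"
    unfolding spanI_def by blast
  thus ?thesis unfolding spanI_def
    by (intro CollectI exI[of _ "\<lambda>i. a * c i"]) (auto simp: restr_def algebra_simps sum_distrib_left)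
qed

lemma spanI_diff: "f \<in> spanI X I G \<Longrightarrow> g \<in> spanI X I G \<Longrightarrow> (\<lambda>x. f x - g x) \<in> spanI X I G"
  using spanI_add[of f X I G "\<lambda>x. (-1) * g x"] spanI_scale[of g X I G "-1"] by simp

lemma mat_app_add: "mat_app X M (\<lambda>x. f x + g x) = (\<lambda>x. mat_app X M f x + mat_app X M g x)"
  unfolding mat_app_def by (auto simp: algebra_simps sum.distrib)
lemma mat_app_diff: "mat_app X M (\<lambda>x. f x - g x) = (\<lambda>x. mat_app X M f x - mat_app X M g x)"
  unfolding mat_app_def by (auto simp: algebra_simps sum_subtractf)
lemma mat_app_scale: "mat_app X M (\<lambda>x. a * f x) = (\<lambda>x. a * mat_app X M f x)"
  unfolding mat_app_def by (auto simp: algebra_simps sum_distrib_left)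

lemma proj_exists:
  assumes "finite X" "finite I"
  shows "\<exists>P. isproj X (spanI X I G) P"
  using assms(2)
proof (induction I rule: finite_induct)
  case empty
  have V: "spanI X {} G = {\<lambda>x. 0}"
    unfolding spanI_def restr_def by (auto simp: fun_eq_iff)
  show ?case
    by (rule exI[of _ "\<lambda>x y. 0"]) (auto simp: V isproj_def is_matX_def mat_app_def dotX_def)
next
  case (insert j I)
  then obtain P where P: "isproj X (spanI X I G) P" by blast
  define rg where "rg = restr X (G j)"
  define r where "r = (\<lambda>x. rg x - mat_app X P rg x)"
  have rgCX: "rg \<in> CX X" unfolding rg_def by (rule restr_CX)
  have PrgV: "mat_app X P rg \<in> spanI X I G" using P rgCX unfolding isproj_def by blast
  have rCX: "r \<in> CX X" using rgCX mat_app_CX[of X P rg] unfolding r_def CX_def by auto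
  have rorth: "\<And>g. g \<in> spanI X I G \<Longrightarrow> dotX X r g = 0"
    using P rgCX unfolding isproj_def r_def by blast
  have Pf: "\<And>f. f \<in> CX X \<Longrightarrow> mat_app X P f \<in> spanI X I G \<and>
       (\<forall>g\<in>spanI X I G. dotX X (\<lambda>x. f x - mat_app X P f x) g = 0)"
    using P unfolding isproj_def by blast
  have Pmat: "is_matX X P" "\<And>x y. P x y = P y x" using P unfolding isproj_def by auto
  have dec: "\<exists>a k. k \<in> spanI X I G \<and> h = (\<lambda>x. a * r x + k x)" if h: "h \<in> spanI X (insert j I) G" for h
  proof -
    obtain c where hc: "h = restr X (\<lambda>x. \<Sum>i\<in>insert j I. c i * G i x)" using h unfolding spanI_def by blast
    define k0 where "k0 = restr X (\<lambda>x. \<Sum>i\<in>I. c i * G i x)"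
    have k0V: "k0 \<in> spanI X I G" unfolding k0_def spanI_def by blast
    define k where "k = (\<lambda>x. c j * mat_app X P rg x + k0 x)"
    have kV: "k \<in> spanI X I G" unfolding k_def by (intro spanI_add spanI_scale PrgV k0V)
    have "h = (\<lambda>x. c j * r x + k x)"
      using insert.hyps unfolding hc k_def r_def k0_def rg_def restr_def by (auto simp: algebra_simps)
    thus ?thesis using kV by blast
  qed
  have incl: "(\<lambda>x. a * r x + k x) \<in> spanI X (insert j I) G" if k: "k \<in> spanI X I G" for a k
  proof -
    obtain c where kc: "k = restr X (\<lambda>x. \<Sum>i\<in>I. c i * G i x)" using k unfolding spanI_def by blast
    obtain c' where pc: "mat_app X P rg = restr X (\<lambda>x. \<Sum>i\<in>I. c' i * G i x)" using PrgV unfolding spanI_def by blast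
    define c'' where "c'' = (\<lambda>i. c i - a * c' i)(j := a)"
    have s1: "(\<Sum>i\<in>I. c'' i * G i x) = (\<Sum>i\<in>I. (c i - a * c' i) * G i x)" for x
      using insert.hyps by (intro sum.cong) (auto simp: c''_def)
    have "(\<lambda>x. a * r x + k x) = restr X (\<lambda>x. \<Sum>i\<in>insert j I. c'' i * G i x)"
    proof
      fix x
      show "a * r x + k x = restr X (\<lambda>x. \<Sum>i\<in>insert j I. c'' i * G i x) x"
        using insert.hyps s1[of x] fun_cong[OF pc, of x]
        by (simp add: r_def kc restr_def rg_def c''_def algebra_simps sum_subtractf sum_distrib_left)
    qed
    thus ?thesis unfolding spanI_def by blast
  qed
  show ?case
  proof (cases "dotX X r r = 0")
    case True
    have r0: "r = (\<lambda>x. 0)"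
    proof
      fix x show "r x = 0" using dotX_self_zero[OF assms(1) True, of x] rCX unfolding CX_def by (cases "x \<in> X") auto
    qed
    show ?thesis
    proof (rule exI[of _ P], unfold isproj_def, intro conjI allI ballI)
      show "is_matX X P" "\<And>x y. P x y = P y x" using Pmat by auto
      fix f assume f: "f \<in> CX X"
      show "mat_app X P f \<in> spanI X (insert j I) G"
        using incl[of "mat_app X P f" 0] Pf[OF f] by simp
      fix g assume "g \<in> spanI X (insert j I) G"
      then obtain a k where k: "k \<in> spanI X I G" "g = (\<lambda>x. a * r x + k x)" using dec by blast
      show "dotX X (\<lambda>x. f x - mat_app X P f x) g = 0"
        using Pf[OF f] k by (simp add: r0)
    qed
  next
    case False
    define d where "d = dotX X r r"
    define P' where "P' = (\<lambda>x y. P x y + r x * r y / d)"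
    have app: "mat_app X P' f = (\<lambda>x. mat_app X P f x + (dotX X r f / d) * r x)" for f
    proof
      fix x
      show "mat_app X P' f x = mat_app X P f x + (dotX X r f / d) * r x"
        using rCX unfolding mat_app_def P'_def dotX_def CX_def
        by (auto simp: algebra_simps sum.distrib sum_distrib_left sum_divide_distrib)
    qed
    show ?thesis
    proof (rule exI[of _ P'], unfold isproj_def, intro conjI allI ballI)
      show "is_matX X P'" using Pmat(1) rCX unfolding is_matX_def P'_def CX_def by auto
      show "\<And>x y. P' x y = P' y x" using Pmat(2) unfolding P'_def by (simp add: mult.commute)
      fix f assume f: "f \<in> CX X"
      show "mat_app X P' f \<in> spanI X (insert j I) G"
        unfolding app using incl[of "mat_app X P f" "dotX X r f / d"] Pf[OF f] by (simp add: add.commute)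
      fix g assume "g \<in> spanI X (insert j I) G"
      then obtain a k where k: "k \<in> spanI X I G" "g = (\<lambda>x. a * r x + k x)" using dec by blast
      have o1: "dotX X (\<lambda>x. f x - mat_app X P f x) k = 0" using Pf[OF f] k(1) by blast
      have o2: "dotX X r k = 0" using rorth k(1) by blast
      have o3: "dotX X r (mat_app X P f) = 0" using rorth Pf[OF f] by blast
      have dne: "d \<noteq> 0" using False d_def by simp
      define lam where "lam = dotX X r f / d"
      have e: "dotX X (\<lambda>x. f x - mat_app X P' f x) g =
            a * (dotX X f r - dotX X (mat_app X P f) r - lam * d)
            + (dotX X (\<lambda>x. f x - mat_app X P f x) k - lam * dotX X r k)"
        unfolding app k(2) lam_def[symmetric]
        by (simp add: dotX_def d_def algebra_simps sum.distrib sum_subtractf sum_distrib_left)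
      have "\<dots> = 0" using o1 o2 o3 dne by (simp add: dotX_comm[of X r] lam_def)
      note e = e this
      show "dotX X (\<lambda>x. f x - mat_app X P' f x) g = 0" using e by simp
    qed
  qed
qed



lemma poly_upto:
  fixes p :: "real poly" assumes "degree p \<le> k" shows "poly p t = (\<Sum>i\<le>k. coeff p i * t ^ i)"
proof -
  have "poly p t = (\<Sum>i\<le>degree p. coeff p i * t ^ i)" by (simp add: poly_altdef)
  also have "\<dots> = (\<Sum>i\<le>k. coeff p i * t ^ i)"
    using assms by (intro sum.mono_neutral_left) (auto simp: coeff_eq_0)
  finally show ?thesis .
qed

definition gen :: "(real^'m) \<times> nat \<Rightarrow> real^'m \<Rightarrow> real" where
  "gen = (\<lambda>(a,i) x. (a \<bullet> x) ^ i)"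

lemma PolX_span: "PolX X k = spanI X (X \<times> {..k}) gen"
proof
  show "PolX X k \<subseteq> spanI X (X \<times> {..k}) gen"
  proof
    fix f assume "f \<in> PolX X k"
    then obtain p where p: "\<And>a. degree (p a) \<le> k"
      "\<And>x. f x = (if x \<in> X then (\<Sum>a\<in>X. poly (p a) (a \<bullet> x)) else 0)"
      unfolding PolX_def by blast
    have "f = restr X (\<lambda>x. \<Sum>ai\<in>X \<times> {..k}. (\<lambda>(a,i). coeff (p a) i) ai * gen ai x)"
    proof
      fix x
      have "(\<Sum>a\<in>X. poly (p a) (a \<bullet> x)) = (\<Sum>a\<in>X. \<Sum>i\<le>k. coeff (p a) i * (a \<bullet> x) ^ i)"
        using poly_upto[OF p(1)] by simp
      also have "\<dots> = (\<Sum>(a,i)\<in>X \<times> {..k}. coeff (p a) i * (a \<bullet> x) ^ i)"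
        by (rule sum.cartesian_product)
      also have "\<dots> = (\<Sum>ai\<in>X \<times> {..k}. (\<lambda>(a,i). coeff (p a) i) ai * gen ai x)"
        by (intro sum.cong) (auto simp: gen_def)
      finally show "f x = restr X (\<lambda>x. \<Sum>ai\<in>X \<times> {..k}. (\<lambda>(a,i). coeff (p a) i) ai * gen ai x) x"
        using p(2) by (simp add: restr_def)
    qed
    thus "f \<in> spanI X (X \<times> {..k}) gen" unfolding spanI_def by blast
  qed
next
  show "spanI X (X \<times> {..k}) gen \<subseteq> PolX X k"
  proof
    fix f assume "f \<in> spanI X (X \<times> {..k}) gen"
    then obtain c where c: "f = restr X (\<lambda>x. \<Sum>ai\<in>X \<times> {..k}. c ai * gen ai x)"
      unfolding spanI_def by blast
    define p where "p = (\<lambda>a. \<Sum>i\<le>k. monom (c (a,i)) i)"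
    have dp: "degree (p a) \<le> k" for a
      unfolding p_def by (intro degree_sum_le) (auto intro: order.trans[OF degree_monom_le])
    have "f x = (if x \<in> X then (\<Sum>a\<in>X. poly (p a) (a \<bullet> x)) else 0)" for x
    proof -
      have "(\<Sum>a\<in>X. poly (p a) (a \<bullet> x)) = (\<Sum>a\<in>X. \<Sum>i\<le>k. c (a,i) * (a \<bullet> x) ^ i)"
        by (simp add: p_def poly_sum poly_monom)
      also have "\<dots> = (\<Sum>(a,i)\<in>X \<times> {..k}. c (a,i) * (a \<bullet> x) ^ i)"
        by (rule sum.cartesian_product)
      also have "\<dots> = (\<Sum>ai\<in>X \<times> {..k}. c ai * gen ai x)"
        by (intro sum.cong) (auto simp: gen_def)
      finally show ?thesis using c by (simp add: restr_def)
    qed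
    thus "f \<in> PolX X k" unfolding PolX_def using dp by blast
  qed
qed

lemma PolX_CX: "PolX X k \<subseteq> CX X"
  unfolding PolX_span by (rule spanI_CX)

lemma PolX_diff: "f \<in> PolX X k \<Longrightarrow> g \<in> PolX X k \<Longrightarrow> (\<lambda>x. f x - g x) \<in> PolX X k"
  unfolding PolX_span by (rule spanI_diff)
lemma PolX_add: "f \<in> PolX X k \<Longrightarrow> g \<in> PolX X k \<Longrightarrow> (\<lambda>x. f x + g x) \<in> PolX X k"
  unfolding PolX_span by (rule spanI_add)
lemma PolX_scale: "f \<in> PolX X k \<Longrightarrow> (\<lambda>x. a * f x) \<in> PolX X k"
  unfolding PolX_span by (rule spanI_scale)

lemma PolX_mono: "k \<le> k' \<Longrightarrow> PolX X k \<subseteq> PolX X k'"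
  unfolding PolX_def by (auto intro: order.trans)

lemma PolX_zeta:
  assumes "finite X" "a \<in> X" "degree p \<le> k"
  shows "restr X (\<lambda>x. poly p (a \<bullet> x)) \<in> PolX X k"
proof -
  define pp where "pp = (\<lambda>b. if b = a then p else 0)"
  have "restr X (\<lambda>x. poly p (a \<bullet> x)) x = (if x \<in> X then (\<Sum>b\<in>X. poly (pp b) (b \<bullet> x)) else 0)" for x
  proof -
    have "(\<Sum>b\<in>X. poly (pp b) (b \<bullet> x)) = poly p (a \<bullet> x)"
    proof -
      have "(\<Sum>b\<in>X. poly (pp b) (b \<bullet> x)) = (\<Sum>b\<in>X. if b = a then poly p (a \<bullet> x) else 0)"
        by (intro sum.cong) (auto simp: pp_def)
      thus ?thesis using assms by simp
    qed
    thus ?thesis by (simp add: restr_def)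
  qed
  moreover have "degree (pp b) \<le> k" for b using assms by (simp add: pp_def)
  ultimately show ?thesis unfolding PolX_def by blast
qed

lemma proj_dot:
  assumes "isproj X V P" "f \<in> CX X" "g \<in> V"
  shows "dotX X (mat_app X P f) g = dotX X f g"
  using assms unfolding isproj_def by (auto simp: dotX_diff_left)

lemma proj_in: "isproj X V P \<Longrightarrow> f \<in> CX X \<Longrightarrow> mat_app X P f \<in> V"
  unfolding isproj_def by blast

lemma proj_id:
  assumes fin: "finite X" and P: "isproj X V P" and VC: "V \<subseteq> CX X"
    and Vd: "\<And>f g. f \<in> V \<Longrightarrow> g \<in> V \<Longrightarrow> (\<lambda>x. f x - g x) \<in> V" and g: "g \<in> V"
  shows "mat_app X P g = g"
proof -
  have gC: "g \<in> CX X" using g VC by blast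
  define h where "h = (\<lambda>x. g x - mat_app X P g x)"
  have hV: "h \<in> V" unfolding h_def using Vd[OF g proj_in[OF P gC]] .
  have "dotX X h h = 0" using P gC hV unfolding isproj_def h_def by blast
  hence "\<And>x. x \<in> X \<Longrightarrow> h x = 0" using dotX_self_zero[OF fin] by blast
  thus ?thesis using gC mat_app_CX[of X P g] unfolding h_def CX_def
    by (intro ext) (case_tac "x \<in> X", auto)
qed

lemma proj_zero:
  assumes fin: "finite X" and P: "isproj X V P" and g: "g \<in> CX X" and orth: "\<And>h. h \<in> V \<Longrightarrow> dotX X g h = 0"
  shows "mat_app X P g = (\<lambda>x. 0)"
proof -
  have PgV: "mat_app X P g \<in> V" using proj_in[OF P g] .
  have "dotX X (mat_app X P g) (mat_app X P g) = dotX X g (mat_app X P g)"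
    using proj_dot[OF P g PgV] .
  also have "\<dots> = 0" using orth[OF PgV] .
  finally have "\<And>x. x \<in> X \<Longrightarrow> mat_app X P g x = 0" using dotX_self_zero[OF fin] by blast
  thus ?thesis by (intro ext) (simp add: mat_app_def)
qed

definition delta :: "(real^'m) set \<Rightarrow> real^'m \<Rightarrow> real^'m \<Rightarrow> real" where
  "delta X y = restr X (\<lambda>z. if z = y then 1 else 0)"

lemma delta_CX: "delta X y \<in> CX X" unfolding delta_def by (rule restr_CX)

lemma mat_app_delta:
  assumes "finite X" "y \<in> X" shows "mat_app X M (delta X y) x = (if x \<in> X then M x y else 0)"
proof -
  have "(\<Sum>z\<in>X. M x z * delta X y z) = (\<Sum>z\<in>X. if z = y then M x y else 0)"
    by (intro sum.cong) (auto simp: delta_def restr_def)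
  thus ?thesis using assms unfolding mat_app_def by simp
qed

lemma matX_eqI:
  assumes "finite X" "is_matX X M" "is_matX X N"
    and "\<And>f. f \<in> CX X \<Longrightarrow> \<forall>x\<in>X. mat_app X M f x = mat_app X N f x"
  shows "M = N"
proof (intro ext)
  fix x y
  show "M x y = N x y"
  proof (cases "x \<in> X \<and> y \<in> X")
    case True
    thus ?thesis using assms(4)[OF delta_CX[of X y]] mat_app_delta[OF assms(1), of y] by force
  next
    case False thus ?thesis using assms(2,3) unfolding is_matX_def by auto
  qed
qed

lemma the_proj:
  assumes fin: "finite X" and ne: "X \<noteq> {}" and P: "isproj X V P" and VC: "V \<subseteq> CX X"
    and Vd: "\<And>f g. f \<in> V \<Longrightarrow> g \<in> V \<Longrightarrow> (\<lambda>x. f x - g x) \<in> V"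
  shows "proj_matrix X V = P"
  unfolding proj_matrix_def
proof (rule the_equality)
  have n0: "real (card X) \<noteq> 0" using fin ne by simp
  have ip: "ipX X f g = dotX X f g / real (card X)" for f g unfolding ipX_def dotX_def by simp
  show "is_matX X P \<and> (\<forall>f\<in>CX X. mat_app X P f \<in> V \<and> (\<forall>g\<in>V. ipX X (\<lambda>x. f x - mat_app X P f x) g = 0))"
    using P unfolding isproj_def ip by simp
  fix M assume M: "is_matX X M \<and> (\<forall>f\<in>CX X. mat_app X M f \<in> V \<and> (\<forall>g\<in>V. ipX X (\<lambda>x. f x - mat_app X M f x) g = 0))"
  show "M = P"
  proof (rule matX_eqI[OF fin])
    show "is_matX X M" using M by blast
    show "is_matX X P" using P unfolding isproj_def by blast
    fix f assume f: "f \<in> CX X"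
    define h where "h = (\<lambda>x. mat_app X M f x - mat_app X P f x)"
    have MV: "mat_app X M f \<in> V" and Mo: "\<And>g. g \<in> V \<Longrightarrow> dotX X (\<lambda>x. f x - mat_app X M f x) g = 0"
      using M f n0 unfolding ip by auto
    have PV: "mat_app X P f \<in> V" and Po: "\<And>g. g \<in> V \<Longrightarrow> dotX X (\<lambda>x. f x - mat_app X P f x) g = 0"
      using P f unfolding isproj_def by auto
    have hV: "h \<in> V" unfolding h_def by (rule Vd[OF MV PV])
    have "h = (\<lambda>x. (f x - mat_app X P f x) - (f x - mat_app X M f x))" unfolding h_def by auto
    hence "dotX X h h = 0" using Po[OF hV] Mo[OF hV] by (simp add: dotX_diff_left)
    thus "\<forall>x\<in>X. mat_app X M f x = mat_app X P f x"
      using dotX_self_zero[OF fin] unfolding h_def by fastforce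
  qed
qed



lemma mat_app_mdiff: "mat_app X (\<lambda>x y. A x y - B x y) f = (\<lambda>x. mat_app X A f x - mat_app X B f x)"
  unfolding mat_app_def by (auto simp: algebra_simps sum_subtractf)

lemma HarmX_sub: "HarmX X i \<subseteq> CX X"
  unfolding HarmX_def using PolX_CX by auto

lemma ipX_diff_left: "ipX X (\<lambda>x. f x - g x) h = ipX X f h - ipX X g h"
  unfolding ipX_def by (simp add: algebra_simps sum_subtractf diff_divide_distrib)

lemma HarmX_diff: "f \<in> HarmX X i \<Longrightarrow> g \<in> HarmX X i \<Longrightarrow> (\<lambda>x. f x - g x) \<in> HarmX X i"
  unfolding HarmX_def by (auto simp: PolX_diff ipX_diff_left split: if_splits)

locale sdes =
  fixes X :: "(real^'m) set"
  assumes fin: "finite X" and ne: "X \<noteq> {}"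
    and sph: "\<forall>x\<in>X. x \<bullet> x = real CARD('m)"
    and des: "spherical_2_design X"
begin

abbreviation "nn \<equiv> real (card X)"

lemma nn_pos: "nn > 0" using fin ne by (simp add: card_gt_0_iff)

lemma des1: "x \<in> X \<Longrightarrow> (\<Sum>y\<in>X. x \<bullet> y) = 0"
  using des unfolding spherical_2_design_def by blast
lemma des2: "x \<in> X \<Longrightarrow> y \<in> X \<Longrightarrow> (\<Sum>z\<in>X. (x \<bullet> z) * (z \<bullet> y)) = nn * (x \<bullet> y)"
  using des nn_pos unfolding spherical_2_design_def by (auto simp: field_simps)

definition Pk :: "nat \<Rightarrow> real^'m \<Rightarrow> real^'m \<Rightarrow> real" where
  "Pk k = (SOME P. isproj X (PolX X k) P)"

lemma Pk: "isproj X (PolX X k) (Pk k)"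
proof -
  have "\<exists>P. isproj X (PolX X k) P"
    unfolding PolX_span by (rule proj_exists[OF fin]) (simp add: fin)
  thus ?thesis unfolding Pk_def by (rule someI_ex)
qed

lemma Pk_mat: "is_matX X (Pk k)" and Pk_sym: "Pk k x y = Pk k y x"
  using Pk[of k] unfolding isproj_def by auto

lemma Pk_in: "f \<in> CX X \<Longrightarrow> mat_app X (Pk k) f \<in> PolX X k"
  using Pk[of k] unfolding isproj_def by blast

lemma Pk_orth: "f \<in> CX X \<Longrightarrow> g \<in> PolX X k \<Longrightarrow> dotX X (\<lambda>x. f x - mat_app X (Pk k) f x) g = 0"
  using Pk[of k] unfolding isproj_def by blast

lemma Pk_id: "g \<in> PolX X k \<Longrightarrow> mat_app X (Pk k) g = g"
  by (rule proj_id[OF fin Pk PolX_CX PolX_diff])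

lemma Pk_zero: "g \<in> CX X \<Longrightarrow> (\<And>h. h \<in> PolX X k \<Longrightarrow> dotX X g h = 0) \<Longrightarrow> mat_app X (Pk k) g = (\<lambda>x. 0)"
  by (rule proj_zero[OF fin Pk])

lemma Pk_dot: "f \<in> CX X \<Longrightarrow> g \<in> PolX X k \<Longrightarrow> dotX X (mat_app X (Pk k) f) g = dotX X f g"
  by (rule proj_dot[OF Pk])

lemma Pk_unique: "isproj X (PolX X k) P \<Longrightarrow> P = Pk k"
  using the_proj[OF fin ne _ PolX_CX PolX_diff, of k] Pk[of k] by metis

definition FF :: "nat \<Rightarrow> real^'m \<Rightarrow> real^'m \<Rightarrow> real" where
  "FF i = (if i = 0 then Pk 0 else (\<lambda>x y. Pk i x y - Pk (i - 1) x y))"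

lemma FF_app: "mat_app X (FF i) f = (if i = 0 then mat_app X (Pk 0) f
    else (\<lambda>x. mat_app X (Pk i) f x - mat_app X (Pk (i - 1)) f x))"
  unfolding FF_def by (simp add: mat_app_mdiff)

lemma FF_mat: "is_matX X (FF i)"
  using Pk_mat unfolding FF_def is_matX_def by auto

lemma FF_sym: "FF i x y = FF i y x"
  unfolding FF_def using Pk_sym by auto

lemma ipX_dot: "ipX X f g = dotX X f g / nn" unfolding ipX_def dotX_def by simp

lemma FF_isproj: "isproj X (HarmX X i) (FF i)"
proof (cases "i = 0")
  case True thus ?thesis using Pk[of 0] by (simp add: FF_def HarmX_def)
next
  case False
  have mono: "PolX X (i - 1) \<subseteq> PolX X i" by (rule PolX_mono) simp
  show ?thesis unfolding isproj_def
  proof (intro conjI allI ballI)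
    show "is_matX X (FF i)" by (rule FF_mat)
    show "\<And>x y. FF i x y = FF i y x" by (rule FF_sym)
    fix f assume f: "f \<in> CX X"
    have app: "mat_app X (FF i) f = (\<lambda>x. mat_app X (Pk i) f x - mat_app X (Pk (i - 1)) f x)"
      using False by (simp add: FF_app)
    have inP: "mat_app X (FF i) f \<in> PolX X i"
      unfolding app using Pk_in[OF f, of i] Pk_in[OF f, of "i-1"] mono by (intro PolX_diff) auto
    have orth: "ipX X (mat_app X (FF i) f) g = 0" if g: "g \<in> PolX X (i - 1)" for g
      using Pk_dot[OF f g] Pk_dot[OF f, of g i] g mono
      unfolding app ipX_dot by (auto simp: dotX_diff_left)
    show "mat_app X (FF i) f \<in> HarmX X i"
      using inP orth False unfolding HarmX_def by auto
    fix h assume h: "h \<in> HarmX X i"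
    have hP: "h \<in> PolX X i" and ho: "\<And>g. g \<in> PolX X (i-1) \<Longrightarrow> dotX X h g = 0"
      using h False nn_pos unfolding HarmX_def ipX_dot by auto
    have "dotX X (\<lambda>x. f x - mat_app X (FF i) f x) h
        = dotX X (\<lambda>x. f x - mat_app X (Pk i) f x) h + dotX X (mat_app X (Pk (i - 1)) f) h"
      unfolding app by (simp add: dotX_def algebra_simps sum.distrib sum_subtractf)
    also have "\<dots> = 0" using Pk_orth[OF f hP] ho[OF Pk_in[OF f]] by (simp add: dotX_comm)
    finally show "dotX X (\<lambda>x. f x - mat_app X (FF i) f x) h = 0" .
  qed
qed

lemma projF_eq: "projF X i = FF i"
  unfolding projF_def by (rule the_proj[OF fin ne FF_isproj HarmX_sub HarmX_diff])

lemma FF_kill_low: "0 < i \<Longrightarrow> g \<in> PolX X (i - 1) \<Longrightarrow> mat_app X (FF i) g = (\<lambda>x. 0)"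
proof -
  assume i: "0 < i" and g: "g \<in> PolX X (i - 1)"
  have "g \<in> PolX X i" using g PolX_mono[of "i-1" i X] by auto
  hence "mat_app X (Pk i) g = g" by (rule Pk_id)
  moreover have "mat_app X (Pk (i-1)) g = g" using g by (rule Pk_id)
  ultimately show ?thesis using i by (simp add: FF_app)
qed

lemma FF_kill_high: "g \<in> CX X \<Longrightarrow> (\<And>h. h \<in> PolX X i \<Longrightarrow> dotX X g h = 0) \<Longrightarrow> mat_app X (FF i) g = (\<lambda>x. 0)"
proof -
  assume g: "g \<in> CX X" and o: "\<And>h. h \<in> PolX X i \<Longrightarrow> dotX X g h = 0"
  have "mat_app X (Pk i) g = (\<lambda>x. 0)" by (rule Pk_zero[OF g o])
  moreover have "mat_app X (Pk (i-1)) g = (\<lambda>x. 0)"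
    using o PolX_mono[of "i-1" i X] by (intro Pk_zero[OF g]) auto
  ultimately show ?thesis by (cases "i = 0") (auto simp add: FF_app)
qed

lemma FF_fix: "h \<in> PolX X i \<Longrightarrow> (\<And>g. 0 < i \<Longrightarrow> g \<in> PolX X (i - 1) \<Longrightarrow> dotX X h g = 0) \<Longrightarrow> mat_app X (FF i) h = h"
proof -
  assume h: "h \<in> PolX X i" and o: "\<And>g. 0 < i \<Longrightarrow> g \<in> PolX X (i - 1) \<Longrightarrow> dotX X h g = 0"
  have hC: "h \<in> CX X" using h PolX_CX by blast
  show ?thesis
  proof (cases "i = 0")
    case True thus ?thesis using Pk_id[OF h] by (simp add: FF_app)
  next
    case False
    have "mat_app X (Pk (i-1)) h = (\<lambda>x. 0)" using o False by (intro Pk_zero[OF hC]) auto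
    thus ?thesis using Pk_id[OF h] False by (simp add: FF_app)
  qed
qed

end


lemma prod_inner_expand:
  fixes u v :: "nat \<Rightarrow> real^'m"
  shows "(\<Prod>l<k. u l \<bullet> v l) = (\<Sum>\<iota>\<in>PiE {..<k} (\<lambda>_. UNIV). (\<Prod>l<k. u l $ \<iota> l) * (\<Prod>l<k. v l $ \<iota> l))"
proof -
  have "(\<Prod>l<k. u l \<bullet> v l) = (\<Prod>l<k. \<Sum>i\<in>UNIV. u l $ i * v l $ i)"
    by (simp add: inner_vec_def)
  also have "\<dots> = (\<Sum>\<iota>\<in>PiE {..<k} (\<lambda>_. UNIV). \<Prod>l<k. u l $ \<iota> l * v l $ \<iota> l)"
    by (rule prod_sum_PiE) auto
  also have "\<dots> = (\<Sum>\<iota>\<in>PiE {..<k} (\<lambda>_. UNIV). (\<Prod>l<k. u l $ \<iota> l) * (\<Prod>l<k. v l $ \<iota> l))"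
    by (simp add: prod.distrib)
  finally show ?thesis .
qed

lemma tensor_zero:
  fixes X :: "(real^'m) set" and g :: "real^'m \<Rightarrow> real" and b :: "nat \<Rightarrow> real^'m"
  assumes fin: "finite X" and z: "(\<Sum>c\<in>X. \<Sum>w\<in>X. g c * g w * (c \<bullet> w) ^ k) = 0"
  shows "(\<Sum>w\<in>X. g w * (\<Prod>l<k. b l \<bullet> w)) = 0"
proof -
  define PI where "PI = PiE {..<k} (\<lambda>_. UNIV :: 'm set)"
  have finPI: "finite PI" unfolding PI_def by (intro finite_PiE) auto
  define A where "A = (\<lambda>(v::real^'m) \<iota>. \<Prod>l<k. v $ \<iota> l)"
  define T where "T = (\<lambda>\<iota>. \<Sum>w\<in>X. g w * A w \<iota>)"
  have pw: "(c \<bullet> w) ^ k = (\<Sum>\<iota>\<in>PI. A c \<iota> * A w \<iota>)" for c w :: "real^'m"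
  proof -
    have "(c \<bullet> w) ^ k = (\<Prod>l<k. (\<lambda>_. c) l \<bullet> (\<lambda>_. w) l)" by simp
    also have "\<dots> = (\<Sum>\<iota>\<in>PI. A c \<iota> * A w \<iota>)"
      unfolding prod_inner_expand PI_def A_def by simp
    finally show ?thesis .
  qed
  have "(\<Sum>\<iota>\<in>PI. T \<iota> * T \<iota>) = (\<Sum>\<iota>\<in>PI. \<Sum>c\<in>X. \<Sum>w\<in>X. (g c * A c \<iota>) * (g w * A w \<iota>))"
    unfolding T_def by (simp add: sum_product)
  also have "\<dots> = (\<Sum>c\<in>X. \<Sum>\<iota>\<in>PI. \<Sum>w\<in>X. (g c * A c \<iota>) * (g w * A w \<iota>))"
    by (rule sum.swap)
  also have "\<dots> = (\<Sum>c\<in>X. \<Sum>w\<in>X. \<Sum>\<iota>\<in>PI. (g c * A c \<iota>) * (g w * A w \<iota>))"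
    by (intro sum.cong refl sum.swap)
  also have "\<dots> = (\<Sum>c\<in>X. \<Sum>w\<in>X. g c * g w * (c \<bullet> w) ^ k)"
    unfolding pw by (intro sum.cong refl) (simp add: sum_distrib_left algebra_simps)
  also have "\<dots> = 0" by (rule z)
  finally have "(\<Sum>\<iota>\<in>PI. T \<iota> * T \<iota>) = 0" .
  hence T0: "\<forall>\<iota>\<in>PI. T \<iota> = 0"
    using sum_nonneg_eq_0_iff[OF finPI, of "\<lambda>\<iota>. T \<iota> * T \<iota>"] by auto
  have pb: "(\<Prod>l<k. b l \<bullet> w) = (\<Sum>\<iota>\<in>PI. (\<Prod>l<k. b l $ \<iota> l) * A w \<iota>)" for w
    unfolding prod_inner_expand[of b "\<lambda>_. w"] PI_def A_def by simp
  have "(\<Sum>w\<in>X. g w * (\<Prod>l<k. b l \<bullet> w)) = (\<Sum>w\<in>X. \<Sum>\<iota>\<in>PI. (\<Prod>l<k. b l $ \<iota> l) * (g w * A w \<iota>))"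
    unfolding pb by (simp add: sum_distrib_left algebra_simps)
  also have "\<dots> = (\<Sum>\<iota>\<in>PI. \<Sum>w\<in>X. (\<Prod>l<k. b l $ \<iota> l) * (g w * A w \<iota>))"
    by (rule sum.swap)
  also have "\<dots> = (\<Sum>\<iota>\<in>PI. (\<Prod>l<k. b l $ \<iota> l) * T \<iota>)"
    unfolding T_def by (simp add: sum_distrib_left)
  also have "\<dots> = 0" using T0 by simp
  finally show ?thesis .
qed



context sdes begin

lemma zeta_pow: "c \<in> X \<Longrightarrow> i \<le> k \<Longrightarrow> restr X (\<lambda>w. (c \<bullet> w) ^ i) \<in> PolX X k"
  using PolX_zeta[OF fin, of c "monom 1 i" k] by (simp add: poly_monom degree_monom_eq)

lemma PolX_prod:
  assumes y: "y \<in> X" and f: "f \<in> PolX X j"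
  shows "restr X (\<lambda>w. (y \<bullet> w) * f w) \<in> PolX X (Suc j)"
proof -
  define h where "h = restr X (\<lambda>w. (y \<bullet> w) * f w)"
  have hC: "h \<in> CX X" unfolding h_def by (rule restr_CX)
  define r where "r = (\<lambda>x. h x - mat_app X (Pk (Suc j)) h x)"
  have rC: "r \<in> CX X" using hC mat_app_CX[of X "Pk (Suc j)" h] unfolding r_def CX_def by auto
  have ro: "\<And>g. g \<in> PolX X (Suc j) \<Longrightarrow> dotX X r g = 0" unfolding r_def by (rule Pk_orth[OF hC])
  obtain p where p: "\<And>a. degree (p a) \<le> j"
      "\<And>x. f x = (if x \<in> X then (\<Sum>a\<in>X. poly (p a) (a \<bullet> x)) else 0)"
    using f unfolding PolX_def by blast
  have key: "(\<Sum>w\<in>X. r w * ((y \<bullet> w) * (a \<bullet> w) ^ i)) = 0" if a: "a \<in> X" and i: "i \<le> j" for a i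
  proof -
    have z: "(\<Sum>c\<in>X. \<Sum>w\<in>X. r c * r w * (c \<bullet> w) ^ Suc i) = 0"
    proof (rule sum.neutral, rule ballI)
      fix c assume c: "c \<in> X"
      have "dotX X r (restr X (\<lambda>w. (c \<bullet> w) ^ Suc i)) = 0"
        using ro zeta_pow[OF c, of "Suc i" "Suc j"] i by auto
      hence "(\<Sum>w\<in>X. r w * (c \<bullet> w) ^ Suc i) = 0" unfolding dotX_def restr_def by simp
      thus "(\<Sum>w\<in>X. r c * r w * (c \<bullet> w) ^ Suc i) = 0"
        by (simp add: mult.assoc sum_distrib_left[symmetric])
    qed
    define b where "b = (\<lambda>l::nat. if l = 0 then y else a)"
    have "(\<Sum>w\<in>X. r w * (\<Prod>l<Suc i. b l \<bullet> w)) = 0" by (rule tensor_zero[OF fin z])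
    moreover have "(\<Prod>l<Suc i. b l \<bullet> w) = (y \<bullet> w) * (a \<bullet> w) ^ i" for w
      by (simp only: prod.lessThan_Suc_shift) (simp add: b_def)
    ultimately show ?thesis by simp
  qed
  have "dotX X r h = 0"
  proof -
    have "dotX X r h = (\<Sum>w\<in>X. r w * ((y \<bullet> w) * (\<Sum>a\<in>X. \<Sum>i\<le>j. coeff (p a) i * (a \<bullet> w) ^ i)))"
      unfolding dotX_def h_def restr_def using p(2) poly_upto[OF p(1)] by (intro sum.cong) auto
    also have "\<dots> = (\<Sum>a\<in>X. \<Sum>i\<le>j. coeff (p a) i * (\<Sum>w\<in>X. r w * ((y \<bullet> w) * (a \<bullet> w) ^ i)))"
    proof -
      have "(\<Sum>w\<in>X. r w * ((y \<bullet> w) * (\<Sum>a\<in>X. \<Sum>i\<le>j. coeff (p a) i * (a \<bullet> w) ^ i)))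
          = (\<Sum>w\<in>X. \<Sum>a\<in>X. \<Sum>i\<le>j. coeff (p a) i * (r w * ((y \<bullet> w) * (a \<bullet> w) ^ i)))"
        by (simp add: sum_distrib_left algebra_simps)
      also have "\<dots> = (\<Sum>a\<in>X. \<Sum>w\<in>X. \<Sum>i\<le>j. coeff (p a) i * (r w * ((y \<bullet> w) * (a \<bullet> w) ^ i)))"
        by (rule sum.swap)
      also have "\<dots> = (\<Sum>a\<in>X. \<Sum>i\<le>j. \<Sum>w\<in>X. coeff (p a) i * (r w * ((y \<bullet> w) * (a \<bullet> w) ^ i)))"
        by (intro sum.cong refl sum.swap)
      finally show ?thesis by (simp add: sum_distrib_left)
    qed
    also have "\<dots> = 0" using key by simp
    finally show ?thesis .
  qed
  moreover have "dotX X r (mat_app X (Pk (Suc j)) h) = 0" by (rule ro[OF Pk_in[OF hC]])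
  moreover have "dotX X r r = dotX X r h - dotX X r (mat_app X (Pk (Suc j)) h)"
    using dotX_diff_right[of X r h "mat_app X (Pk (Suc j)) h"] by (simp add: r_def[symmetric])
  ultimately have "dotX X r r = 0" by simp
  hence "\<And>x. x \<in> X \<Longrightarrow> r x = 0" using dotX_self_zero[OF fin] by blast
  hence hh: "h = mat_app X (Pk (Suc j)) h"
    using hC mat_app_CX[of X "Pk (Suc j)" h] unfolding r_def CX_def
    by (intro ext) (case_tac "x \<in> X", auto)
  have "h \<in> PolX X (Suc j)" by (subst hh) (rule Pk_in[OF hC])
  thus ?thesis unfolding h_def .
qed

end


context sdes begin


lemma inner_self: "x \<in> X \<Longrightarrow> x \<bullet> x = real CARD('m)" using sph by blast

lemma inner_lt:
  assumes "x \<in> X" "y \<in> X" "x \<noteq> y" shows "x \<bullet> y < real CARD('m)"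
proof -
  have "0 < (x - y) \<bullet> (x - y)" using assms(3) by simp
  also have "(x - y) \<bullet> (x - y) = x \<bullet> x + y \<bullet> y - 2 * (x \<bullet> y)"
    by (simp add: inner_diff_left inner_diff_right inner_commute)
  finally show ?thesis using inner_self assms(1,2) by simp
qed

lemma inner_eq_mm: "x \<in> X \<Longrightarrow> y \<in> X \<Longrightarrow> x \<bullet> y = real CARD('m) \<longleftrightarrow> x = y"
  using inner_lt inner_self by force

lemma fin_A: "finite (inner_set X)"
proof -
  have "inner_set X \<subseteq> (\<lambda>(x,y). x \<bullet> y) ` (X \<times> X)" unfolding inner_set_def by auto
  thus ?thesis using fin by (auto intro: finite_subset)
qed

lemma mm_notin: "real CARD('m) \<notin> inner_set X"
  unfolding inner_set_def using inner_lt by fastforce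

lemma inner_in: "x \<in> X \<Longrightarrow> y \<in> X \<Longrightarrow> x \<bullet> y \<in> inner_set' X"
  unfolding inner_set'_def inner_set_def using inner_self by (cases "x = y") auto

lemma fin_A': "finite (inner_set' X)" unfolding inner_set'_def using fin_A by simp

lemma card_A': "card (inner_set' X) = Suc (card (inner_set X))"
  unfolding inner_set'_def using fin_A mm_notin by simp

definition ind :: "real poly" where
  "ind = smult (1 / (\<Prod>\<alpha>\<in>inner_set X. (real CARD('m) - \<alpha>))) (\<Prod>\<alpha>\<in>inner_set X. [:-\<alpha>, 1:])"

lemma deg_ind: "degree ind \<le> card (inner_set X)"
proof -
  have "degree (\<Prod>\<alpha>\<in>inner_set X. [:-\<alpha>, 1:]) \<le> (\<Sum>\<alpha>\<in>inner_set X. degree [:-\<alpha>, 1:])"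
    using degree_prod_sum_le[OF fin_A, of "\<lambda>\<alpha>. [:-\<alpha>, 1:]"] by (simp add: o_def)
  also have "\<dots> = card (inner_set X)" by simp
  finally show ?thesis unfolding ind_def by simp
qed

lemma poly_ind: "x \<in> X \<Longrightarrow> y \<in> X \<Longrightarrow> poly ind (x \<bullet> y) = (if x = y then 1 else 0)"
proof -
  assume x: "x \<in> X" and y: "y \<in> X"
  have nz: "(\<Prod>\<alpha>\<in>inner_set X. (real CARD('m) - \<alpha>)) \<noteq> 0"
    using mm_notin fin_A by (auto simp: prod_zero_iff)
  show ?thesis
  proof (cases "x = y")
    case True thus ?thesis using inner_self[OF x] nz by (simp add: ind_def poly_prod)
  next
    case False
    hence "x \<bullet> y \<in> inner_set X" using x y unfolding inner_set_def by blast
    thus ?thesis using False fin_A by (simp add: ind_def poly_prod prod_zero_iff)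
  qed
qed

lemma PolX_full: "PolX X (card (inner_set X)) = CX X"
proof
  show "PolX X (card (inner_set X)) \<subseteq> CX X" by (rule PolX_CX)
  show "CX X \<subseteq> PolX X (card (inner_set X))"
  proof
    fix f assume f: "f \<in> CX X"
    define p where "p = (\<lambda>a. smult (f a) ind)"
    have "f x = (if x \<in> X then (\<Sum>a\<in>X. poly (p a) (a \<bullet> x)) else 0)" for x
    proof (cases "x \<in> X")
      case True
      have "(\<Sum>a\<in>X. poly (p a) (a \<bullet> x)) = (\<Sum>a\<in>X. if a = x then f x else 0)"
        using True by (intro sum.cong) (auto simp: p_def poly_ind)
      thus ?thesis using True fin by simp
    next
      case False thus ?thesis using f unfolding CX_def by auto
    qed
    moreover have "degree (p a) \<le> card (inner_set X)" for a
      using deg_ind unfolding p_def by (simp add: order.trans[OF degree_smult_le])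
    ultimately show "f \<in> PolX X (card (inner_set X))" unfolding PolX_def by blast
  qed
qed

lemma Pk_full: "x \<in> X \<Longrightarrow> y \<in> X \<Longrightarrow> Pk (card (inner_set X)) x y = (if x = y then 1 else 0)"
proof -
  assume x: "x \<in> X" and y: "y \<in> X"
  have "mat_app X (Pk (card (inner_set X))) (delta X y) = delta X y"
    using PolX_full delta_CX by (intro Pk_id) auto
  hence "mat_app X (Pk (card (inner_set X))) (delta X y) x = delta X y x" by simp
  thus ?thesis using mat_app_delta[OF fin y] x by (simp add: delta_def restr_def)
qed

lemma A_ne: "inner_set X \<noteq> {}"
proof
  assume e: "inner_set X = {}"
  obtain x where x: "x \<in> X" using ne by blast
  have "X = {x}"
  proof (rule ccontr)
    assume "X \<noteq> {x}"
    then obtain y where "y \<in> X" "y \<noteq> x" using x by blast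
    hence "x \<bullet> y \<in> inner_set X" using x unfolding inner_set_def by blast
    thus False using e by simp
  qed
  hence "x \<bullet> x = 0" using des1[OF x] by simp
  thus False using inner_self[OF x] by simp
qed

lemma s_pos: "card (inner_set X) \<ge> 1"
  using A_ne fin_A by (simp add: Suc_le_eq card_gt_0_iff)

lemma PolX0_const: "restr X (\<lambda>_. C) \<in> PolX X 0"
proof -
  obtain a where a: "a \<in> X" using ne by blast
  show ?thesis using PolX_zeta[OF fin a, of "[:C:]" 0] by simp
qed

lemma PolX0_char: "g \<in> PolX X 0 \<Longrightarrow> \<exists>C. \<forall>x\<in>X. g x = C"
proof -
  assume "g \<in> PolX X 0"
  then obtain p where p: "\<And>a. degree (p a) \<le> 0"
      "\<And>x. g x = (if x \<in> X then (\<Sum>a\<in>X. poly (p a) (a \<bullet> x)) else 0)"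
    unfolding PolX_def by blast
  have "\<forall>x\<in>X. g x = (\<Sum>a\<in>X. coeff (p a) 0)"
    using p poly_upto[OF p(1)] by simp
  thus ?thesis by blast
qed

lemma Pk0: assumes xy: "x \<in> X" "y \<in> X" shows "Pk 0 x y = 1 / nn"
proof -
  define J where "J = (\<lambda>x y. if x \<in> X \<and> y \<in> X then 1 / nn else 0)"
  have appJ: "mat_app X J f = restr X (\<lambda>_. (\<Sum>y\<in>X. f y) / nn)" for f
    unfolding mat_app_def J_def restr_def by (auto simp: sum_divide_distrib)
  have "isproj X (PolX X 0) J"
    unfolding isproj_def
  proof (intro conjI allI ballI)
    show "is_matX X J" unfolding is_matX_def J_def by auto
    show "\<And>x y. J x y = J y x" unfolding J_def by auto
    fix f assume f: "f \<in> CX X"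
    show "mat_app X J f \<in> PolX X 0" unfolding appJ by (rule PolX0_const)
    fix g assume "g \<in> PolX X 0"
    then obtain C where C: "\<forall>x\<in>X. g x = C" using PolX0_char by blast
    have "dotX X (\<lambda>x. f x - mat_app X J f x) g = (\<Sum>x\<in>X. (f x - (\<Sum>y\<in>X. f y) / nn) * C)"
      unfolding dotX_def appJ restr_def using C by (intro sum.cong) auto
    also have "\<dots> = C * (\<Sum>x\<in>X. f x) - C * (nn * ((\<Sum>y\<in>X. f y) / nn))"
      by (simp only: left_diff_distrib sum_subtractf sum_constant) (simp add: sum_distrib_left[symmetric] sum_distrib_right algebra_simps)
    also have "\<dots> = 0" using nn_pos by simp
    finally show "dotX X (\<lambda>x. f x - mat_app X J f x) g = 0" .
  qed
  hence JP: "J = Pk 0" by (rule Pk_unique)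
  show ?thesis using xy unfolding JP[symmetric] J_def by simp
qed

lemma PolX1_char: "g \<in> PolX X 1 \<Longrightarrow> \<exists>c0 c1. \<forall>x\<in>X. g x = (\<Sum>a\<in>X. c0 a + c1 a * (a \<bullet> x))"
proof -
  assume "g \<in> PolX X 1"
  then obtain p where p: "\<And>a. degree (p a) \<le> 1"
      "\<And>x. g x = (if x \<in> X then (\<Sum>a\<in>X. poly (p a) (a \<bullet> x)) else 0)"
    unfolding PolX_def by blast
  have "\<forall>x\<in>X. g x = (\<Sum>a\<in>X. coeff (p a) 0 + coeff (p a) 1 * (a \<bullet> x))"
    using p poly_upto[OF p(1)] by simp
  thus ?thesis by (rule_tac x="\<lambda>a. coeff (p a) 0" in exI, rule_tac x="\<lambda>a. coeff (p a) 1" in exI) simp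
qed

lemma J1_fix:
  assumes g: "g \<in> PolX X 1" and y: "y \<in> X"
  shows "(\<Sum>x\<in>X. (1 + x \<bullet> y) * g x) = nn * g y"
proof -
  obtain c0 c1 where c: "\<forall>x\<in>X. g x = (\<Sum>a\<in>X. c0 a + c1 a * (a \<bullet> x))" using PolX1_char[OF g] by blast
  have inner: "(\<Sum>x\<in>X. (1 + x \<bullet> y) * (c0 a + c1 a * (a \<bullet> x))) = nn * (c0 a + c1 a * (a \<bullet> y))"
    if a: "a \<in> X" for a
  proof -
    have "(\<Sum>x\<in>X. (1 + x \<bullet> y) * (c0 a + c1 a * (a \<bullet> x)))
       = c0 a * nn + c0 a * (\<Sum>x\<in>X. y \<bullet> x) + c1 a * (\<Sum>x\<in>X. a \<bullet> x) + c1 a * (\<Sum>x\<in>X. (a \<bullet> x) * (x \<bullet> y))"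
      by (simp add: algebra_simps sum.distrib sum_distrib_left inner_commute)
    also have "\<dots> = nn * (c0 a + c1 a * (a \<bullet> y))"
      using des1[OF y] des1[OF a] des2[OF a y] by (simp add: algebra_simps)
    finally show ?thesis .
  qed
  have "(\<Sum>x\<in>X. (1 + x \<bullet> y) * g x) = (\<Sum>x\<in>X. \<Sum>a\<in>X. (1 + x \<bullet> y) * (c0 a + c1 a * (a \<bullet> x)))"
    using c by (simp add: sum_distrib_left)
  also have "\<dots> = (\<Sum>a\<in>X. \<Sum>x\<in>X. (1 + x \<bullet> y) * (c0 a + c1 a * (a \<bullet> x)))" by (rule sum.swap)
  also have "\<dots> = (\<Sum>a\<in>X. nn * (c0 a + c1 a * (a \<bullet> y)))" using inner by simp
  also have "\<dots> = nn * g y" using c y by (simp add: sum_distrib_left)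
  finally show ?thesis .
qed

lemma Pk1: assumes xy: "x \<in> X" "y \<in> X" shows "Pk 1 x y = (1 + x \<bullet> y) / nn"
proof -
  define J where "J = (\<lambda>x y. if x \<in> X \<and> y \<in> X then (1 + x \<bullet> y) / nn else 0)"
  have "isproj X (PolX X 1) J"
    unfolding isproj_def
  proof (intro conjI allI ballI)
    show "is_matX X J" unfolding is_matX_def J_def by auto
    show "\<And>x y. J x y = J y x" unfolding J_def by (auto simp: inner_commute)
    fix f assume f: "f \<in> CX X"
    define p where "p = (\<lambda>a. [: f a / nn, f a / nn :])"
    have "mat_app X J f x = (if x \<in> X then (\<Sum>a\<in>X. poly (p a) (a \<bullet> x)) else 0)" for x
      unfolding mat_app_def J_def p_def
      by (auto intro!: sum.cong simp: algebra_simps inner_commute add_divide_distrib)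
    moreover have "degree (p a) \<le> 1" for a unfolding p_def by simp
    ultimately show "mat_app X J f \<in> PolX X 1" unfolding PolX_def by blast
    fix g assume g: "g \<in> PolX X 1"
    have "dotX X (mat_app X J f) g = (\<Sum>x\<in>X. \<Sum>y\<in>X. (1 + x \<bullet> y) / nn * f y * g x)"
      unfolding dotX_def mat_app_def J_def by (simp add: sum_distrib_right)
    also have "\<dots> = (\<Sum>y\<in>X. \<Sum>x\<in>X. (1 + x \<bullet> y) / nn * f y * g x)" by (rule sum.swap)
    also have "\<dots> = (\<Sum>y\<in>X. f y * ((\<Sum>x\<in>X. (1 + x \<bullet> y) * g x) / nn))"
      by (simp add: sum_distrib_left sum_divide_distrib algebra_simps)
    also have "\<dots> = (\<Sum>y\<in>X. f y * g y)" using J1_fix[OF g] nn_pos by simp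
    finally show "dotX X (\<lambda>x. f x - mat_app X J f x) g = 0"
      by (simp add: dotX_diff_left dotX_def)
  qed
  hence JP: "J = Pk 1" by (rule Pk_unique)
  show ?thesis using xy unfolding JP[symmetric] J_def by simp
qed

lemma FF1: assumes "x \<in> X" "y \<in> X" shows "nn * FF 1 x y = x \<bullet> y"
proof -
  have "FF 1 x y = Pk 1 x y - Pk 0 x y" by (simp add: FF_def)
  thus ?thesis using nn_pos unfolding Pk0[OF assms] Pk1[OF assms] by (simp add: field_simps)
qed

end


locale sdesq = sdes X for X :: "(real^'m) set" +
  fixes s :: nat and q :: "nat \<Rightarrow> real poly"
  assumes s_def: "card (inner_set X) = s"
    and pq: "predegree_polys X s q"
begin

definition ipf :: "(real \<Rightarrow> real) \<Rightarrow> (real \<Rightarrow> real) \<Rightarrow> real" where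
  "ipf \<phi> \<psi> = (\<Sum>x\<in>X. \<Sum>y\<in>X. \<phi> (x \<bullet> y) * \<psi> (x \<bullet> y)) / nn\<^sup>2"

lemma pred_ip_eq: "pred_ip X p r = ipf (poly p) (poly r)"
proof -
  define f where "f = (\<lambda>\<alpha>. poly p \<alpha> * poly r \<alpha>)"
  define g where "g = (\<lambda>z::(real^'m) \<times> (real^'m). fst z \<bullet> snd z)"
  have fin2: "finite (X \<times> X)" using fin by simp
  have img: "g ` (X \<times> X) \<subseteq> inner_set' X" unfolding g_def using inner_in by auto
  have "(\<Sum>x\<in>X. \<Sum>y\<in>X. f (x \<bullet> y)) = (\<Sum>z\<in>X \<times> X. f (g z))"
    unfolding g_def by (simp add: sum.cartesian_product split_def)
  also have "\<dots> = (\<Sum>\<alpha>\<in>inner_set' X. \<Sum>z\<in>{z \<in> X \<times> X. g z = \<alpha>}. f (g z))"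
    by (rule sum.group[OF fin2 fin_A' img, symmetric])
  also have "\<dots> = (\<Sum>\<alpha>\<in>inner_set' X. real (kappa X \<alpha>) * f \<alpha>)"
  proof (intro sum.cong refl)
    fix \<alpha> assume "\<alpha> \<in> inner_set' X"
    have S: "{z \<in> X \<times> X. g z = \<alpha>} = {(x, y). x \<in> X \<and> y \<in> X \<and> x \<bullet> y = \<alpha>}"
      unfolding g_def by auto
    have "(\<Sum>z\<in>{z \<in> X \<times> X. g z = \<alpha>}. f (g z)) = (\<Sum>z\<in>{z \<in> X \<times> X. g z = \<alpha>}. f \<alpha>)"
      by (intro sum.cong) auto
    thus "(\<Sum>z\<in>{z \<in> X \<times> X. g z = \<alpha>}. f (g z)) = real (kappa X \<alpha>) * f \<alpha>"
      unfolding kappa_def S[symmetric] by simp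
  qed
  finally show ?thesis unfolding pred_ip_def ipf_def f_def by (simp add: mult.assoc)
qed

lemma ipf_comm: "ipf \<phi> \<psi> = ipf \<psi> \<phi>" unfolding ipf_def by (simp add: mult.commute)

lemma ipf_cong: "(\<And>\<alpha>. \<alpha> \<in> inner_set' X \<Longrightarrow> \<phi> \<alpha> = \<phi>' \<alpha>) \<Longrightarrow> ipf \<phi> \<psi> = ipf \<phi>' \<psi>"
  unfolding ipf_def using inner_in by (auto intro!: sum.cong arg_cong2[where f="(/)"])

lemma ipf_sum_left: "finite I \<Longrightarrow> ipf (\<lambda>t. \<Sum>i\<in>I. d i * f i t) \<psi> = (\<Sum>i\<in>I. d i * ipf (f i) \<psi>)"
  unfolding ipf_def
  by (simp add: sum_distrib_right sum_distrib_left sum_divide_distrib algebra_simps sum.swap[of _ I])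

lemma ipf_diff_left: "ipf (\<lambda>t. \<phi> t - \<phi>' t) \<psi> = ipf \<phi> \<psi> - ipf \<phi>' \<psi>"
  unfolding ipf_def by (simp add: algebra_simps sum_subtractf diff_divide_distrib)

lemma ipf_self_nonneg: "ipf \<phi> \<phi> \<ge> 0"
  unfolding ipf_def by (auto intro!: divide_nonneg_nonneg sum_nonneg)

lemma ipf_self_zero: "ipf \<phi> \<phi> = 0 \<Longrightarrow> \<alpha> \<in> inner_set' X \<Longrightarrow> \<phi> \<alpha> = 0"
proof -
  assume z: "ipf \<phi> \<phi> = 0" and a: "\<alpha> \<in> inner_set' X"
  obtain x y where xy: "x \<in> X" "y \<in> X" "x \<bullet> y = \<alpha>"
    using a ne inner_self unfolding inner_set'_def inner_set_def by auto
  have "(\<Sum>x\<in>X. \<Sum>y\<in>X. \<phi> (x \<bullet> y) * \<phi> (x \<bullet> y)) = 0" using z nn_pos unfolding ipf_def by simp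
  moreover have nn1: "\<And>x. 0 \<le> (\<Sum>y\<in>X. \<phi> (x \<bullet> y) * \<phi> (x \<bullet> y))" by (intro sum_nonneg) simp
  ultimately have "\<forall>x\<in>X. (\<Sum>y\<in>X. \<phi> (x \<bullet> y) * \<phi> (x \<bullet> y)) = 0"
    using sum_nonneg_eq_0_iff[OF fin, of "\<lambda>x. \<Sum>y\<in>X. \<phi> (x \<bullet> y) * \<phi> (x \<bullet> y)"] by auto
  hence "\<forall>x\<in>X. \<forall>y\<in>X. \<phi> (x \<bullet> y) * \<phi> (x \<bullet> y) = 0"
  proof (intro ballI)
    fix x' y' assume all: "\<forall>x\<in>X. (\<Sum>y\<in>X. \<phi> (x \<bullet> y) * \<phi> (x \<bullet> y)) = 0" and x': "x' \<in> X" and y': "y' \<in> X"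
    have "(\<Sum>y\<in>X. \<phi> (x' \<bullet> y) * \<phi> (x' \<bullet> y)) = 0" using all x' by blast
    thus "\<phi> (x' \<bullet> y') * \<phi> (x' \<bullet> y') = 0"
      using sum_nonneg_eq_0_iff[OF fin, of "\<lambda>y. \<phi> (x' \<bullet> y) * \<phi> (x' \<bullet> y)"] y' by simp
  qed
  thus ?thesis using xy by auto
qed

lemma q_nz: "k \<le> s \<Longrightarrow> q k \<noteq> 0" using pq unfolding predegree_polys_def by blast
lemma q_deg: "k \<le> s \<Longrightarrow> degree (q k) = k" using pq unfolding predegree_polys_def by blast
lemma q_orth: "k \<le> s \<Longrightarrow> h \<le> s \<Longrightarrow> ipf (poly (q k)) (poly (q h)) = (if k = h then poly (q k) (real CARD('m)) else 0)"
  using pq unfolding predegree_polys_def pred_ip_eq by blast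

lemma card_A'_s: "card (inner_set' X) = Suc s" using card_A' s_def by simp

lemma poly_nonvanish:
  assumes "p \<noteq> 0" "degree p \<le> s" shows "\<exists>\<alpha>\<in>inner_set' X. poly p \<alpha> \<noteq> 0"
proof (rule ccontr)
  assume "\<not> ?thesis"
  hence "inner_set' X \<subseteq> {x. poly p x = 0}" by auto
  hence "card (inner_set' X) \<le> card {x. poly p x = 0}"
    using poly_roots_finite[OF assms(1)] by (rule card_mono[rotated])
  also have "\<dots> \<le> degree p" by (rule card_poly_roots_bound[OF assms(1)])
  finally show False using card_A'_s assms(2) by simp
qed

lemma qm_pos: "k \<le> s \<Longrightarrow> poly (q k) (real CARD('m)) > 0"
proof -
  assume k: "k \<le> s"
  have e: "ipf (poly (q k)) (poly (q k)) = poly (q k) (real CARD('m))" using q_orth[OF k k] by simp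
  obtain \<alpha> where a: "\<alpha> \<in> inner_set' X" "poly (q k) \<alpha> \<noteq> 0"
    using poly_nonvanish[OF q_nz[OF k]] q_deg[OF k] k by auto
  have "ipf (poly (q k)) (poly (q k)) \<noteq> 0" using ipf_self_zero a by blast
  thus ?thesis using ipf_self_nonneg[of "poly (q k)"] e by linarith
qed

lemma lc_q: "k \<le> s \<Longrightarrow> coeff (q k) k \<noteq> 0"
  using q_nz q_deg by (metis leading_coeff_0_iff)

lemma basis:
  "k \<le> s \<Longrightarrow> degree g \<le> k \<Longrightarrow> \<exists>e. g = (\<Sum>i\<le>k. smult (e i) (q i))"
proof (induction k arbitrary: g)
  case 0
  have q0: "degree (q 0) = 0" using q_deg by simp
  define c where "c = coeff g 0 / coeff (q 0) 0"
  have "g = smult c (q 0)"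
  proof (rule poly_eqI)
    fix n show "coeff g n = coeff (smult c (q 0)) n"
    proof (cases n)
      case 0 thus ?thesis using lc_q[of 0] by (simp add: c_def)
    next
      case (Suc m) thus ?thesis using 0 q0 by (simp add: coeff_eq_0)
    qed
  qed
  thus ?case by (intro exI[of _ "\<lambda>_. c"]) simp
next
  case (Suc k)
  define c where "c = coeff g (Suc k) / coeff (q (Suc k)) (Suc k)"
  define g' where "g' = g - smult c (q (Suc k))"
  have dg': "degree g' \<le> k"
  proof (rule degree_le, intro allI impI)
    fix n assume n: "k < n"
    show "coeff g' n = 0"
    proof (cases "n = Suc k")
      case True thus ?thesis using lc_q[OF Suc.prems(1)] by (simp add: g'_def c_def)
    next
      case False hence "Suc k < n" using n by simp
      thus ?thesis using Suc.prems q_deg[OF Suc.prems(1)] by (simp add: g'_def coeff_eq_0)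
    qed
  qed
  obtain e where e: "g' = (\<Sum>i\<le>k. smult (e i) (q i))" using Suc.IH[OF _ dg'] Suc.prems by auto
  define e' where "e' = e(Suc k := c)"
  have "(\<Sum>i\<le>Suc k. smult (e' i) (q i)) = (\<Sum>i\<le>k. smult (e i) (q i)) + smult c (q (Suc k))"
    by (simp add: e'_def)
  also have "\<dots> = g" using e by (simp add: g'_def)
  finally show ?case by (intro exI[of _ e']) simp
qed

lemma basis_coeff:
  assumes "k \<le> s" "g = (\<Sum>i\<le>k. smult (e i) (q i))" shows "coeff g k = e k * coeff (q k) k"
proof -
  have "coeff g k = (\<Sum>i\<le>k. e i * coeff (q i) k)" using assms(2) by (simp add: coeff_sum)
  also have "\<dots> = (\<Sum>i\<le>k. if i = k then e k * coeff (q k) k else 0)"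
  proof (intro sum.cong refl)
    fix i assume "i \<in> {..k}"
    thus "e i * coeff (q i) k = (if i = k then e k * coeff (q k) k else 0)"
      using q_deg[of i] assms(1) by (auto simp: coeff_eq_0)
  qed
  finally show ?thesis by simp
qed

lemma ipf_basis:
  assumes "k \<le> s" "h \<le> s" "g = (\<Sum>i\<le>k. smult (e i) (q i))"
  shows "ipf (poly g) (poly (q h)) = (if h \<le> k then e h * poly (q h) (real CARD('m)) else 0)"
proof -
  have "ipf (poly g) (poly (q h)) = (\<Sum>i\<le>k. e i * ipf (poly (q i)) (poly (q h)))"
  proof -
    have "poly g = (\<lambda>t. \<Sum>i\<le>k. e i * poly (q i) t)" using assms(3) by (simp add: poly_sum fun_eq_iff)
    thus ?thesis using ipf_sum_left[of "{..k}" e "\<lambda>i. poly (q i)"] by simp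
  qed
  also have "\<dots> = (\<Sum>i\<le>k. if i = h then e h * poly (q h) (real CARD('m)) else 0)"
    using assms(1,2) by (intro sum.cong refl) (auto simp: q_orth)
  finally show ?thesis by simp
qed

definition lag :: "real \<Rightarrow> real poly" where
  "lag \<beta> = smult (1 / (\<Prod>\<gamma>\<in>inner_set' X - {\<beta>}. (\<beta> - \<gamma>))) (\<Prod>\<gamma>\<in>inner_set' X - {\<beta>}. [:-\<gamma>, 1:])"

lemma lag_deg: "\<beta> \<in> inner_set' X \<Longrightarrow> degree (lag \<beta>) \<le> s"
proof -
  assume b: "\<beta> \<in> inner_set' X"
  have "degree (\<Prod>\<gamma>\<in>inner_set' X - {\<beta>}. [:-\<gamma>, 1:]) \<le> (\<Sum>\<gamma>\<in>inner_set' X - {\<beta>}. degree [:-\<gamma>, 1:])"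
    using degree_prod_sum_le[of "inner_set' X - {\<beta>}" "\<lambda>\<gamma>. [:-\<gamma>, 1:]"] fin_A' by (simp add: o_def)
  also have "\<dots> = card (inner_set' X - {\<beta>})" by simp
  also have "\<dots> = s" using b card_A'_s fin_A' by simp
  finally show ?thesis unfolding lag_def by (simp add: order.trans[OF degree_smult_le])
qed

lemma lag_val: "\<beta> \<in> inner_set' X \<Longrightarrow> \<alpha> \<in> inner_set' X \<Longrightarrow> poly (lag \<beta>) \<alpha> = (if \<alpha> = \<beta> then 1 else 0)"
proof -
  assume b: "\<beta> \<in> inner_set' X" and a: "\<alpha> \<in> inner_set' X"
  have nz: "(\<Prod>\<gamma>\<in>inner_set' X - {\<beta>}. (\<beta> - \<gamma>)) \<noteq> 0" using fin_A' by simp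
  show ?thesis
  proof (cases "\<alpha> = \<beta>")
    case True thus ?thesis using nz by (simp add: lag_def poly_prod)
  next
    case False
    hence "\<alpha> \<in> inner_set' X - {\<beta>}" using a by simp
    thus ?thesis using False fin_A' by (simp add: lag_def poly_prod prod_zero_iff)
  qed
qed

lemma expand_fun: "\<exists>e. \<forall>\<alpha>\<in>inner_set' X. \<phi> \<alpha> = (\<Sum>i\<le>s. e i * poly (q i) \<alpha>)"
proof -
  define L where "L = (\<Sum>\<beta>\<in>inner_set' X. smult (\<phi> \<beta>) (lag \<beta>))"
  have dL: "degree L \<le> s" unfolding L_def
    by (intro degree_sum_le fin_A') (simp add: order.trans[OF degree_smult_le] lag_deg)
  obtain e where e: "L = (\<Sum>i\<le>s. smult (e i) (q i))" using basis[OF order.refl dL] by blast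
  have "\<phi> \<alpha> = (\<Sum>i\<le>s. e i * poly (q i) \<alpha>)" if a: "\<alpha> \<in> inner_set' X" for \<alpha>
  proof -
    have "poly L \<alpha> = (\<Sum>\<beta>\<in>inner_set' X. \<phi> \<beta> * (if \<alpha> = \<beta> then 1 else 0))"
      unfolding L_def poly_sum using a by (intro sum.cong) (auto simp: lag_val)
    also have "\<dots> = \<phi> \<alpha>" using a fin_A' by (simp add: if_distrib cong: if_cong)
    finally show ?thesis using e by (simp add: poly_sum)
  qed
  thus ?thesis by blast
qed

lemma coeff_ident:
  assumes e: "\<forall>\<alpha>\<in>inner_set' X. \<phi> \<alpha> = (\<Sum>i\<le>s. e i * poly (q i) \<alpha>)" and k: "k \<le> s"
  shows "ipf \<phi> (poly (q k)) = e k * poly (q k) (real CARD('m))"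
proof -
  have "ipf \<phi> (poly (q k)) = ipf (\<lambda>t. \<Sum>i\<le>s. e i * poly (q i) t) (poly (q k))"
    using e by (intro ipf_cong) auto
  also have "\<dots> = (\<Sum>i\<le>s. e i * ipf (poly (q i)) (poly (q k)))" by (rule ipf_sum_left) simp
  also have "\<dots> = (\<Sum>i\<le>s. if i = k then e k * poly (q k) (real CARD('m)) else 0)"
    using k by (intro sum.cong refl) (auto simp: q_orth)
  finally show ?thesis using k by simp
qed

end


context sdesq begin

lemma s_ge1: "s \<ge> 1" using s_pos s_def by simp

lemma ipf_shift: "ipf (\<lambda>t. t * poly p t) (poly r) = ipf (poly p) (poly (pCons 0 r))"
  unfolding ipf_def by (simp add: algebra_simps)

lemma ipf_pCons: "ipf (\<lambda>t. t * poly p t) \<psi> = ipf (poly (pCons 0 p)) \<psi>"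
  unfolding ipf_def by simp

lemma deg_pCons0: "k \<le> s \<Longrightarrow> degree (pCons 0 (q k)) = Suc k"
  using q_nz q_deg by (simp add: degree_pCons_eq)

lemma three_term:
  assumes j: "j < s"
  shows "\<exists>a b c. c \<noteq> 0 \<and> (\<forall>\<alpha>\<in>inner_set' X. \<alpha> * poly (q (Suc j)) \<alpha> =
      a * (if Suc (Suc j) \<le> s then poly (q (Suc (Suc j))) \<alpha> else 0) + b * poly (q (Suc j)) \<alpha> + c * poly (q j) \<alpha>)"
proof -
  define \<phi> where "\<phi> = (\<lambda>\<alpha>::real. \<alpha> * poly (q (Suc j)) \<alpha>)"
  obtain e where e: "\<forall>\<alpha>\<in>inner_set' X. \<phi> \<alpha> = (\<Sum>i\<le>s. e i * poly (q i) \<alpha>)" using expand_fun by blast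
  have ident: "k \<le> s \<Longrightarrow> ipf \<phi> (poly (q k)) = e k * poly (q k) (real CARD('m))" for k
    by (rule coeff_ident[OF e])
  have low: "e k = 0" if k: "k < j" for k
  proof -
    have ks: "k \<le> s" using k j by simp
    have dk: "degree (pCons 0 (q k)) \<le> j" using deg_pCons0[OF ks] k by simp
    obtain d where d: "pCons 0 (q k) = (\<Sum>i\<le>j. smult (d i) (q i))" using basis[OF _ dk] j by auto
    have "ipf \<phi> (poly (q k)) = ipf (poly (pCons 0 (q k))) (poly (q (Suc j)))"
      unfolding \<phi>_def ipf_shift by (rule ipf_comm)
    also have "\<dots> = 0" using ipf_basis[OF _ _ d, of "Suc j"] j by simp
    finally show ?thesis using ident[OF ks] qm_pos[OF ks] by simp
  qed
  have high: "e k = 0" if k: "Suc (Suc j) < k" "k \<le> s" for k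
  proof -
    have ds: "degree (pCons 0 (q (Suc j))) \<le> Suc (Suc j)" using deg_pCons0[of "Suc j"] j by simp
    obtain d where d: "pCons 0 (q (Suc j)) = (\<Sum>i\<le>Suc (Suc j). smult (d i) (q i))"
      using basis[OF _ ds] k by auto
    have "ipf \<phi> (poly (q k)) = ipf (poly (pCons 0 (q (Suc j)))) (poly (q k))"
      unfolding \<phi>_def ipf_pCons ..
    also have "\<dots> = 0" using ipf_basis[OF _ k(2) d] k by simp
    finally show ?thesis using ident[OF k(2)] qm_pos[OF k(2)] by simp
  qed
  have cnz: "e j \<noteq> 0"
  proof -
    have js: "j \<le> s" using j by simp
    have ds: "degree (pCons 0 (q j)) \<le> Suc j" using deg_pCons0[OF js] by simp
    obtain d where d: "pCons 0 (q j) = (\<Sum>i\<le>Suc j. smult (d i) (q i))" using basis[OF _ ds] j by auto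
    have "coeff (pCons 0 (q j)) (Suc j) = d (Suc j) * coeff (q (Suc j)) (Suc j)"
      by (rule basis_coeff[OF _ d]) (use j in simp)
    hence dnz: "d (Suc j) \<noteq> 0" using lc_q[OF js] by auto
    have "ipf \<phi> (poly (q j)) = ipf (poly (pCons 0 (q j))) (poly (q (Suc j)))"
      unfolding \<phi>_def ipf_shift by (rule ipf_comm)
    also have "\<dots> = d (Suc j) * poly (q (Suc j)) (real CARD('m))"
      using ipf_basis[OF _ _ d, of "Suc j"] j by simp
    finally have "e j * poly (q j) (real CARD('m)) = d (Suc j) * poly (q (Suc j)) (real CARD('m))"
      using ident[OF js] by simp
    thus ?thesis using dnz qm_pos[of "Suc j"] j by auto
  qed
  have fin_sum: "(\<Sum>i\<le>s. e i * poly (q i) \<alpha>) =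
      e (Suc (Suc j)) * (if Suc (Suc j) \<le> s then poly (q (Suc (Suc j))) \<alpha> else 0)
      + e (Suc j) * poly (q (Suc j)) \<alpha> + e j * poly (q j) \<alpha>" for \<alpha>
  proof -
    have "(\<Sum>i\<le>s. e i * poly (q i) \<alpha>) = (\<Sum>i\<le>s. (if i = Suc (Suc j) then e i * poly (q i) \<alpha> else 0)
        + (if i = Suc j then e i * poly (q i) \<alpha> else 0) + (if i = j then e i * poly (q i) \<alpha> else 0))"
    proof (intro sum.cong refl)
      fix i assume i: "i \<in> {..s}"
      show "e i * poly (q i) \<alpha> = (if i = Suc (Suc j) then e i * poly (q i) \<alpha> else 0)
        + (if i = Suc j then e i * poly (q i) \<alpha> else 0) + (if i = j then e i * poly (q i) \<alpha> else 0)"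
      proof (cases "i < j")
        case True thus ?thesis using low by auto
      next
        case False
        show ?thesis
        proof (cases "Suc (Suc j) < i")
          case True thus ?thesis using high i by auto
        next
          case False2: False
          hence "i = j \<or> i = Suc j \<or> i = Suc (Suc j)" using False by linarith
          thus ?thesis by auto
        qed
      qed
    qed
    also have "\<dots> = e (Suc (Suc j)) * (if Suc (Suc j) \<le> s then poly (q (Suc (Suc j))) \<alpha> else 0)
      + e (Suc j) * poly (q (Suc j)) \<alpha> + e j * poly (q j) \<alpha>"
      using j by (simp add: sum.distrib)
    finally show ?thesis .
  qed
  show ?thesis
    by (rule exI[of _ "e (Suc (Suc j))"], rule exI[of _ "e (Suc j)"], rule exI[of _ "e j"])
       (use cnz e fin_sum in \<open>simp add: \<phi>_def\<close>)
qed

definition Kp :: "real poly" where "Kp = (\<Sum>k<s. q k)"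

lemma Kp_deg: "degree Kp \<le> s - 1"
  unfolding Kp_def by (intro degree_sum_le) (auto simp: q_deg)

lemma ipf_sum_right: "finite I \<Longrightarrow> ipf \<phi> (\<lambda>t. \<Sum>i\<in>I. f i t) = (\<Sum>i\<in>I. ipf \<phi> (f i))"
  using ipf_sum_left[of I "\<lambda>_. 1" f \<phi>] by (simp add: ipf_comm)

lemma Kp_repr: assumes "degree w \<le> s - 1" shows "ipf (poly w) (poly Kp) = poly w (real CARD('m))"
proof -
  obtain d where d: "w = (\<Sum>i\<le>s - 1. smult (d i) (q i))" using basis[OF _ assms] by auto
  have "ipf (poly w) (poly Kp) = (\<Sum>k<s. ipf (poly w) (poly (q k)))"
    unfolding Kp_def poly_sum by (rule ipf_sum_right) simp
  also have "\<dots> = (\<Sum>k<s. d k * poly (q k) (real CARD('m)))"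
    using ipf_basis[OF _ _ d] by (intro sum.cong refl) auto
  also have "{..<s} = {..s - 1}" using s_ge1 by auto
  also have "(\<Sum>k\<le>s - 1. d k * poly (q k) (real CARD('m))) = poly w (real CARD('m))"
    using d by (simp add: poly_sum)
  finally show ?thesis .
qed

lemma sum_q: assumes a: "\<alpha> \<in> inner_set' X"
  shows "(\<Sum>k\<le>s. poly (q k) \<alpha>) = (if \<alpha> = real CARD('m) then nn else 0)"
proof -
  define \<phi> where "\<phi> = (\<lambda>\<alpha>::real. if \<alpha> = real CARD('m) then nn else 0)"
  obtain e where e: "\<forall>\<alpha>\<in>inner_set' X. \<phi> \<alpha> = (\<Sum>i\<le>s. e i * poly (q i) \<alpha>)" using expand_fun by blast
  have e1: "e k = 1" if k: "k \<le> s" for k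
  proof -
    have inner: "(\<Sum>y\<in>X. \<phi> (x \<bullet> y) * poly (q k) (x \<bullet> y)) = nn * poly (q k) (real CARD('m))"
      if x: "x \<in> X" for x
    proof -
      have "(\<Sum>y\<in>X. \<phi> (x \<bullet> y) * poly (q k) (x \<bullet> y)) = (\<Sum>y\<in>X. if y = x then nn * poly (q k) (real CARD('m)) else 0)"
      proof (intro sum.cong refl)
        fix y assume y: "y \<in> X"
        show "\<phi> (x \<bullet> y) * poly (q k) (x \<bullet> y) = (if y = x then nn * poly (q k) (real CARD('m)) else 0)"
        proof (cases "y = x")
          case True thus ?thesis using inner_self[OF x] by (simp add: \<phi>_def)
        next
          case False hence "x \<bullet> y \<noteq> real CARD('m)" using inner_eq_mm[OF x y] by auto
          thus ?thesis using False by (simp add: \<phi>_def)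
        qed
      qed
      thus ?thesis using x fin by simp
    qed
    have "ipf \<phi> (poly (q k)) = (\<Sum>x\<in>X. nn * poly (q k) (real CARD('m))) / nn\<^sup>2"
      unfolding ipf_def using inner by simp
    also have "\<dots> = poly (q k) (real CARD('m))" using nn_pos by (simp add: power2_eq_square)
    finally show ?thesis using coeff_ident[OF e k] qm_pos[OF k] by simp
  qed
  have "\<phi> \<alpha> = (\<Sum>k\<le>s. poly (q k) \<alpha>)" using e a e1 by simp
  thus ?thesis unfolding \<phi>_def by simp
qed

end


lemma mat_app_sum: "finite I \<Longrightarrow> mat_app X M (\<lambda>z. \<Sum>k\<in>I. f k z) = (\<lambda>x. \<Sum>k\<in>I. mat_app X M (f k) x)"
proof (rule ext)
  fix x assume I: "finite I"
  show "mat_app X M (\<lambda>z. \<Sum>k\<in>I. f k z) x = (\<Sum>k\<in>I. mat_app X M (f k) x)"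
  proof (cases "x \<in> X")
    case True
    have "(\<Sum>y\<in>X. M x y * (\<Sum>k\<in>I. f k y)) = (\<Sum>y\<in>X. \<Sum>k\<in>I. M x y * f k y)"
      by (simp add: sum_distrib_left)
    also have "\<dots> = (\<Sum>k\<in>I. \<Sum>y\<in>X. M x y * f k y)" by (rule sum.swap)
    finally show ?thesis using True unfolding mat_app_def by simp
  next
    case False thus ?thesis unfolding mat_app_def by simp
  qed
qed

context sdesq begin

abbreviation "Pm \<equiv> Pk (s - 1)"
definition TT :: real where "TT = (\<Sum>x\<in>X. Pm x x)"

lemma trace_F: "traceX X (projF X s) = nn - TT"
proof -
  have "traceX X (projF X s) = (\<Sum>x\<in>X. 1 - Pm x x)"
    unfolding traceX_def projF_eq FF_def using s_ge1 Pk_full s_def by (intro sum.cong) auto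
  thus ?thesis unfolding TT_def by (simp add: sum_subtractf)
qed

lemma col_Pk: "y \<in> X \<Longrightarrow> mat_app X (Pk k) (delta X y) x = (if x \<in> X then Pk k x y else 0)"
  by (rule mat_app_delta[OF fin])

lemma Pk_sq: "y \<in> X \<Longrightarrow> (\<Sum>z\<in>X. Pk k y z * Pk k y z) = Pk k y y"
proof -
  assume y: "y \<in> X"
  define c where "c = mat_app X (Pk k) (delta X y)"
  have "mat_app X (Pk k) c = c" unfolding c_def by (rule Pk_id[OF Pk_in[OF delta_CX]])
  hence "mat_app X (Pk k) c y = c y" by simp
  moreover have "mat_app X (Pk k) c y = (\<Sum>z\<in>X. Pk k y z * Pk k z y)"
  proof -
    have "mat_app X (Pk k) c y = (\<Sum>z\<in>X. Pk k y z * c z)" using y unfolding mat_app_def by simp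
    also have "\<dots> = (\<Sum>z\<in>X. Pk k y z * Pk k z y)"
      using col_Pk[OF y] by (intro sum.cong) (simp_all add: c_def)
    finally show ?thesis .
  qed
  ultimately have "(\<Sum>z\<in>X. Pk k y z * Pk k z y) = Pk k y y" using y col_Pk unfolding c_def by simp
  moreover have "(\<Sum>z\<in>X. Pk k y z * Pk k z y) = (\<Sum>z\<in>X. Pk k y z * Pk k y z)"
  proof (intro sum.cong refl)
    fix z show "Pk k y z * Pk k z y = Pk k y z * Pk k y z" using Pk_sym[of k z y] by simp
  qed
  ultimately show ?thesis by simp
qed

lemma Pk_tel: "Pk k x y = (\<Sum>i\<le>k. FF i x y)"
  by (induction k) (auto simp: FF_def)

lemma Kcol: "y \<in> X \<Longrightarrow> restr X (\<lambda>w. poly Kp (w \<bullet> y)) \<in> PolX X (s - 1)"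
  using PolX_zeta[OF fin _ Kp_deg, of y] by (simp add: inner_commute)

lemma Pm_K: "y \<in> X \<Longrightarrow> (\<Sum>x\<in>X. Pm y x * poly Kp (x \<bullet> y)) = poly Kp (real CARD('m))"
proof -
  assume y: "y \<in> X"
  have "mat_app X Pm (restr X (\<lambda>w. poly Kp (w \<bullet> y))) = restr X (\<lambda>w. poly Kp (w \<bullet> y))"
    by (rule Pk_id[OF Kcol[OF y]])
  hence "mat_app X Pm (restr X (\<lambda>w. poly Kp (w \<bullet> y))) y = restr X (\<lambda>w. poly Kp (w \<bullet> y)) y" by simp
  thus ?thesis using y inner_self[OF y] unfolding mat_app_def restr_def
    by (simp cong: sum.cong add: if_distrib)
qed

lemma K_sq: "(\<Sum>x\<in>X. \<Sum>y\<in>X. poly Kp (x \<bullet> y) * poly Kp (x \<bullet> y)) = nn\<^sup>2 * poly Kp (real CARD('m))"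
proof -
  have "ipf (poly Kp) (poly Kp) = poly Kp (real CARD('m))" by (rule Kp_repr[OF Kp_deg])
  thus ?thesis unfolding ipf_def using nn_pos by (simp add: field_simps)
qed

lemma sq_identity:
  "(\<Sum>x\<in>X. \<Sum>y\<in>X. (nn * Pm x y - poly Kp (x \<bullet> y))\<^sup>2) = nn\<^sup>2 * (TT - poly Kp (real CARD('m)))"
proof -
  have a: "(\<Sum>x\<in>X. \<Sum>y\<in>X. Pm x y * Pm x y) = TT" unfolding TT_def using Pk_sq by simp
  have b: "(\<Sum>x\<in>X. \<Sum>y\<in>X. Pm x y * poly Kp (x \<bullet> y)) = nn * poly Kp (real CARD('m))"
  proof -
    have "(\<Sum>x\<in>X. \<Sum>y\<in>X. Pm x y * poly Kp (x \<bullet> y)) = (\<Sum>y\<in>X. \<Sum>x\<in>X. Pm y x * poly Kp (x \<bullet> y))"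
    proof (subst sum.swap, intro sum.cong refl)
      fix x y show "Pm x y * poly Kp (x \<bullet> y) = Pm y x * poly Kp (x \<bullet> y)" using Pk_sym[of "s-1" x y] by simp
    qed
    also have "\<dots> = (\<Sum>y\<in>X. poly Kp (real CARD('m)))" using Pm_K by simp
    finally show ?thesis by simp
  qed
  have "(\<Sum>x\<in>X. \<Sum>y\<in>X. (nn * Pm x y - poly Kp (x \<bullet> y))\<^sup>2)
      = nn\<^sup>2 * (\<Sum>x\<in>X. \<Sum>y\<in>X. Pm x y * Pm x y) - 2 * nn * (\<Sum>x\<in>X. \<Sum>y\<in>X. Pm x y * poly Kp (x \<bullet> y))
        + (\<Sum>x\<in>X. \<Sum>y\<in>X. poly Kp (x \<bullet> y) * poly Kp (x \<bullet> y))"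
    by (simp add: power2_eq_square algebra_simps sum.distrib sum_subtractf sum_distrib_left)
  also have "\<dots> = nn\<^sup>2 * (TT - poly Kp (real CARD('m)))"
    unfolding a b K_sq by (simp add: power2_eq_square algebra_simps)
  finally show ?thesis .
qed

lemma TT_ge: "poly Kp (real CARD('m)) \<le> TT"
proof -
  have "0 \<le> (\<Sum>x\<in>X. \<Sum>y\<in>X. (nn * Pm x y - poly Kp (x \<bullet> y))\<^sup>2)" by (intro sum_nonneg) auto
  thus ?thesis unfolding sq_identity using nn_pos by (simp add: zero_le_mult_iff)
qed

lemma TT_eq_iff: "TT = poly Kp (real CARD('m)) \<longleftrightarrow> (\<forall>x\<in>X. \<forall>y\<in>X. nn * Pm x y = poly Kp (x \<bullet> y))"
proof
  assume e: "TT = poly Kp (real CARD('m))"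
  hence z: "(\<Sum>x\<in>X. \<Sum>y\<in>X. (nn * Pm x y - poly Kp (x \<bullet> y))\<^sup>2) = 0" unfolding sq_identity by simp
  show "\<forall>x\<in>X. \<forall>y\<in>X. nn * Pm x y = poly Kp (x \<bullet> y)"
  proof (intro ballI)
    fix x y assume x: "x \<in> X" and y: "y \<in> X"
    have "(\<Sum>y\<in>X. (nn * Pm x y - poly Kp (x \<bullet> y))\<^sup>2) = 0"
      using z sum_nonneg_eq_0_iff[OF fin, of "\<lambda>x. \<Sum>y\<in>X. (nn * Pm x y - poly Kp (x \<bullet> y))\<^sup>2"] x
      by (simp add: sum_nonneg)
    hence "(nn * Pm x y - poly Kp (x \<bullet> y))\<^sup>2 = 0"
      using sum_nonneg_eq_0_iff[OF fin, of "\<lambda>y. (nn * Pm x y - poly Kp (x \<bullet> y))\<^sup>2"] y by simp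
    thus "nn * Pm x y = poly Kp (x \<bullet> y)" by simp
  qed
next
  assume e: "\<forall>x\<in>X. \<forall>y\<in>X. nn * Pm x y = poly Kp (x \<bullet> y)"
  have "(\<Sum>x\<in>X. \<Sum>y\<in>X. (nn * Pm x y - poly Kp (x \<bullet> y))\<^sup>2) = 0" using e by simp
  thus "TT = poly Kp (real CARD('m))" unfolding sq_identity using nn_pos by simp
qed

lemma qs_m: "poly (q s) (real CARD('m)) = nn - poly Kp (real CARD('m))"
proof -
  have m: "real CARD('m) \<in> inner_set' X" unfolding inner_set'_def by simp
  have "(\<Sum>k\<le>s. poly (q k) (real CARD('m))) = nn" using sum_q[OF m] by simp
  moreover have "(\<Sum>k\<le>s. poly (q k) (real CARD('m))) = poly Kp (real CARD('m)) + poly (q s) (real CARD('m))"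
    unfolding Kp_def poly_sum by (simp add: lessThan_Suc_atMost[symmetric])
  ultimately show ?thesis by simp
qed

lemma main_ineq: "traceX X (projF X s) \<le> poly (q s) (real CARD('m))"
  using TT_ge unfolding trace_F qs_m by simp

lemma main_eq_iff: "traceX X (projF X s) = poly (q s) (real CARD('m)) \<longleftrightarrow> TT = poly Kp (real CARD('m))"
  unfolding trace_F qs_m by auto

end


lemma sum_split_nat: "j \<le> n \<Longrightarrow> (\<Sum>i\<le>n. f i) = (\<Sum>i\<le>j. f i) + (\<Sum>i\<in>{Suc j..n}. f i)"
proof -
  assume j: "j \<le> n"
  have "{..n} = {..j} \<union> {Suc j..n}" using j by auto
  moreover have "{..j} \<inter> {Suc j..n} = {}" by auto
  ultimately show ?thesis by (simp add: sum.union_disjoint)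
qed

context sdesq begin

definition DD :: "nat \<Rightarrow> bool" where
  "DD j \<longleftrightarrow> (\<forall>k. j \<le> k \<and> k \<le> s \<longrightarrow> (\<forall>x\<in>X. \<forall>y\<in>X. nn * FF k x y = poly (q k) (x \<bullet> y)))"

lemma FF_Pk: assumes f: "f \<in> CX X" shows "mat_app X (FF j) (mat_app X (Pk j) f) = mat_app X (FF j) f"
proof (cases "j = 0")
  case True thus ?thesis using Pk_id[OF Pk_in[OF f]] by (simp add: FF_app)
next
  case False
  define r where "r = (\<lambda>x. f x - mat_app X (Pk j) f x)"
  have rC: "r \<in> CX X" using f mat_app_CX[of X "Pk j" f] unfolding r_def CX_def by auto
  have "mat_app X (Pk (j - 1)) r = (\<lambda>x. 0)"
  proof (rule Pk_zero[OF rC])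
    fix h assume "h \<in> PolX X (j - 1)"
    hence "h \<in> PolX X j" using PolX_mono[of "j - 1" j X] by auto
    thus "dotX X r h = 0" unfolding r_def by (rule Pk_orth[OF f])
  qed
  hence "mat_app X (Pk (j - 1)) f = mat_app X (Pk (j - 1)) (mat_app X (Pk j) f)"
    unfolding r_def mat_app_diff by (auto simp: fun_eq_iff)
  thus ?thesis using False Pk_id[OF Pk_in[OF f]] by (simp add: FF_app)
qed

context
  assumes eqK: "\<forall>x\<in>X. \<forall>y\<in>X. nn * Pm x y = poly Kp (x \<bullet> y)"
begin

lemma base: "DD s"
  unfolding DD_def
proof (intro allI impI ballI)
  fix k x y assume k: "s \<le> k \<and> k \<le> s" and x: "x \<in> X" and y: "y \<in> X"
  hence ks: "k = s" by simp
  have a: "x \<bullet> y \<in> inner_set' X" by (rule inner_in[OF x y])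
  have "(\<Sum>k\<le>s. poly (q k) (x \<bullet> y)) = poly Kp (x \<bullet> y) + poly (q s) (x \<bullet> y)"
    unfolding Kp_def poly_sum by (simp add: lessThan_Suc_atMost[symmetric])
  moreover have "(\<Sum>k\<le>s. poly (q k) (x \<bullet> y)) = (if x = y then nn else 0)"
    using sum_q[OF a] inner_eq_mm[OF x y] by simp
  moreover have FFs: "FF s x y = (if x = y then 1 else 0) - Pm x y"
    using s_ge1 Pk_full[OF x y] s_def by (simp add: FF_def)
  moreover have "nn * FF s x y = (if x = y then nn else 0) - nn * Pm x y"
    unfolding FFs by (simp add: right_diff_distrib)
  moreover have e2: "nn * Pm x y = poly Kp (x \<bullet> y)" using eqK x y by blast
  ultimately have "nn * FF s x y = poly (q s) (x \<bullet> y)" by linarith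
  thus "nn * FF k x y = poly (q k) (x \<bullet> y)" using ks by simp
qed

context
  fixes j assumes js: "j < s" and DS: "DD (Suc j)"
begin

lemma kill:
  assumes k: "Suc j \<le> k" "k \<le> s" and y: "y \<in> X" and h: "h \<in> PolX X (k - 1)"
  shows "(\<Sum>w\<in>X. poly (q k) (w \<bullet> y) * h w) = 0"
proof -
  have "(\<Sum>w\<in>X. poly (q k) (w \<bullet> y) * h w) = (\<Sum>w\<in>X. nn * (FF k y w * h w))"
  proof (intro sum.cong refl)
    fix w assume w: "w \<in> X"
    have "nn * FF k w y = poly (q k) (w \<bullet> y)" using DS k w y unfolding DD_def by blast
    thus "poly (q k) (w \<bullet> y) * h w = nn * (FF k y w * h w)" using FF_sym[of k w y] by simp
  qed
  also have "\<dots> = nn * mat_app X (FF k) h y" using y by (simp add: mat_app_def sum_distrib_left)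
  also have "\<dots> = 0" using FF_kill_low[of k h] k h by simp
  finally show ?thesis .
qed

lemma Pj: assumes x: "x \<in> X" and y: "y \<in> X" shows "nn * Pk j x y = (\<Sum>i\<le>j. poly (q i) (x \<bullet> y))"
proof -
  have j1: "j \<le> s - 1" using js by simp
  have "Pm x y = Pk j x y + (\<Sum>i\<in>{Suc j..s - 1}. FF i x y)"
    unfolding Pk_tel[of "s - 1"] Pk_tel[of j] by (rule sum_split_nat[OF j1])
  hence "nn * Pm x y = nn * Pk j x y + (\<Sum>i\<in>{Suc j..s - 1}. nn * FF i x y)"
    by (simp add: algebra_simps sum_distrib_left)
  also have "(\<Sum>i\<in>{Suc j..s - 1}. nn * FF i x y) = (\<Sum>i\<in>{Suc j..s - 1}. poly (q i) (x \<bullet> y))"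
    using DS x y unfolding DD_def by (intro sum.cong refl) auto
  finally have e1: "nn * Pm x y = nn * Pk j x y + (\<Sum>i\<in>{Suc j..s - 1}. poly (q i) (x \<bullet> y))" .
  have "poly Kp (x \<bullet> y) = (\<Sum>i\<le>s - 1. poly (q i) (x \<bullet> y))"
    unfolding Kp_def poly_sum using s_ge1 by (intro sum.cong) auto
  also have "\<dots> = (\<Sum>i\<le>j. poly (q i) (x \<bullet> y)) + (\<Sum>i\<in>{Suc j..s - 1}. poly (q i) (x \<bullet> y))"
    by (rule sum_split_nat[OF j1])
  finally show ?thesis using e1 eqK x y by simp
qed

lemma step: assumes x: "x \<in> X" and y: "y \<in> X" shows "nn * FF j x y = poly (q j) (x \<bullet> y)"
proof -
  define col where "col = (\<lambda>i. restr X (\<lambda>w. poly (q i) (w \<bullet> y)))"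
  have colP: "col i \<in> PolX X i" if "i \<le> s" for i
    unfolding col_def using PolX_zeta[OF fin y, of "q i" i] q_deg that by (simp add: inner_commute)
  have orth: "dotX X (col j) g = 0" if j0: "0 < j" and g: "g \<in> PolX X (j - 1)" for g
  proof -
    obtain a b c where c: "c \<noteq> 0" and tt: "\<forall>\<alpha>\<in>inner_set' X. \<alpha> * poly (q (Suc j)) \<alpha> =
      a * (if Suc (Suc j) \<le> s then poly (q (Suc (Suc j))) \<alpha> else 0) + b * poly (q (Suc j)) \<alpha> + c * poly (q j) \<alpha>"
      using three_term[OF js] by blast
    have l1: "j - 1 \<le> j" and l2: "j - 1 \<le> Suc j" by simp_all
    have gj: "g \<in> PolX X j" and gSj: "g \<in> PolX X (Suc j)"
      using g subsetD[OF PolX_mono[OF l1]] subsetD[OF PolX_mono[OF l2]] by blast+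
    define h where "h = restr X (\<lambda>w. (y \<bullet> w) * g w)"
    have hP: "h \<in> PolX X (Suc j - 1)" unfolding h_def using PolX_prod[OF y g] j0 by simp
    have t1: "(\<Sum>w\<in>X. poly (q (Suc j)) (w \<bullet> y) * h w) = 0" by (rule kill[OF le_refl _ y hP]) (use js in simp)
    have t3: "(\<Sum>w\<in>X. poly (q (Suc j)) (w \<bullet> y) * g w) = 0" by (rule kill[OF le_refl _ y]) (use js gj in simp_all)
    have t2: "(\<Sum>w\<in>X. (if Suc (Suc j) \<le> s then poly (q (Suc (Suc j))) (w \<bullet> y) else 0) * g w) = 0"
    proof (cases "Suc (Suc j) \<le> s")
      case True thus ?thesis using kill[of "Suc (Suc j)" y g] y gSj by simp
    next
      case False thus ?thesis by simp
    qed
    have "c * dotX X (col j) g = (\<Sum>w\<in>X. c * poly (q j) (w \<bullet> y) * g w)"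
      unfolding dotX_def col_def restr_def by (simp add: sum_distrib_left algebra_simps)
    also have "\<dots> = (\<Sum>w\<in>X. poly (q (Suc j)) (w \<bullet> y) * h w
        - a * ((if Suc (Suc j) \<le> s then poly (q (Suc (Suc j))) (w \<bullet> y) else 0) * g w)
        - b * (poly (q (Suc j)) (w \<bullet> y) * g w))"
    proof (intro sum.cong refl)
      fix w assume w: "w \<in> X"
      have "w \<bullet> y * poly (q (Suc j)) (w \<bullet> y) =
        a * (if Suc (Suc j) \<le> s then poly (q (Suc (Suc j))) (w \<bullet> y) else 0) + b * poly (q (Suc j)) (w \<bullet> y)
        + c * poly (q j) (w \<bullet> y)" using tt inner_in[OF w y] by blast
      thus "c * poly (q j) (w \<bullet> y) * g w = poly (q (Suc j)) (w \<bullet> y) * h w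
        - a * ((if Suc (Suc j) \<le> s then poly (q (Suc (Suc j))) (w \<bullet> y) else 0) * g w)
        - b * (poly (q (Suc j)) (w \<bullet> y) * g w)"
        using w unfolding h_def restr_def by (simp add: algebra_simps inner_commute)
    qed
    also have "\<dots> = 0" using t1 t2 t3 by (simp add: sum_subtractf sum_distrib_left[symmetric])
    finally show ?thesis using c by simp
  qed
  have fixj: "mat_app X (FF j) (col j) = col j"
    by (rule FF_fix[OF colP]) (use js orth in auto)
  have killi: "mat_app X (FF j) (col i) = (\<lambda>x. 0)" if "i < j" for i
  proof -
    have iS: "i \<le> s" and ij: "i \<le> j - 1" using that js by auto
    have "col i \<in> PolX X (j - 1)" by (rule subsetD[OF PolX_mono[OF ij] colP[OF iS]])
    thus ?thesis using FF_kill_low[of j] that by simp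
  qed
  define u where "u = mat_app X (Pk j) (delta X y)"
  have u: "(\<lambda>z. nn * u z) = (\<lambda>z. \<Sum>i\<le>j. col i z)"
  proof
    fix z show "nn * u z = (\<Sum>i\<le>j. col i z)"
      using Pj[OF _ y, of z] mat_app_delta[OF fin y] unfolding u_def col_def restr_def by auto
  qed
  have "nn * FF j x y = nn * mat_app X (FF j) (delta X y) x" using mat_app_delta[OF fin y] x by simp
  also have "\<dots> = nn * mat_app X (FF j) u x" unfolding u_def by (simp add: FF_Pk[OF delta_CX])
  also have "\<dots> = mat_app X (FF j) (\<lambda>z. nn * u z) x" by (simp add: mat_app_scale)
  also have "\<dots> = (\<Sum>i\<le>j. mat_app X (FF j) (col i) x)" unfolding u by (simp add: mat_app_sum)
  also have "\<dots> = (\<Sum>i\<le>j. if i = j then col j x else 0)"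
    using fixj killi by (intro sum.cong refl) auto
  also have "\<dots> = poly (q j) (x \<bullet> y)" using x by (simp add: col_def restr_def)
  finally show ?thesis .
qed

end

lemma all_FF: "j \<le> s \<Longrightarrow> x \<in> X \<Longrightarrow> y \<in> X \<Longrightarrow> nn * FF j x y = poly (q j) (x \<bullet> y)"
proof -
  have "\<forall>d. d \<le> s \<longrightarrow> DD (s - d)"
  proof (intro allI)
    fix d show "d \<le> s \<longrightarrow> DD (s - d)"
    proof (induction d)
      case 0 thus ?case using base by simp
    next
      case (Suc d)
      show ?case
      proof
        assume d: "Suc d \<le> s"
        define j where "j = s - Suc d"
        have js: "j < s" and jS: "Suc j = s - d" using d unfolding j_def by auto
        have D: "DD (Suc j)" using Suc d jS by simp
        show "DD (s - Suc d)" unfolding j_def[symmetric] DD_def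
        proof (intro allI impI ballI)
          fix k x y assume k: "j \<le> k \<and> k \<le> s" and x: "x \<in> X" and y: "y \<in> X"
          show "nn * FF k x y = poly (q k) (x \<bullet> y)"
          proof (cases "k = j")
            case True thus ?thesis using step[OF js D x y] by simp
          next
            case False thus ?thesis using D k x y unfolding DD_def by auto
          qed
        qed
      qed
    qed
  qed
  hence "DD (s - s)" by blast
  hence D0: "DD 0" by simp
  assume "j \<le> s" "x \<in> X" "y \<in> X"
  thus ?thesis using D0 unfolding DD_def by blast
qed

end

end


context sdesq begin

lemma ipf_diff_sq: "ipf (\<lambda>t. a t - b t) (\<lambda>t. a t - b t) = ipf a a - 2 * ipf a b + ipf b b"
  unfolding ipf_def
  by (simp add: algebra_simps sum_subtractf sum.distrib sum_distrib_left diff_divide_distrib add_divide_distrib)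

lemma QPS_imp_eq:
  assumes Q: "Q_polynomial_scheme X s" shows "TT = poly Kp (real CARD('m))"
proof -
  have ex: "\<forall>i\<le>s. \<exists>v :: real poly. v \<noteq> 0 \<and> degree v = i \<and>
        (\<forall>x\<in>X. \<forall>y\<in>X. real (card X) * projF X i x y = poly v (real (card X) * projF X 1 x y))"
    using Q unfolding Q_polynomial_scheme_def by blast
  define V where "V i = (SOME v :: real poly. v \<noteq> 0 \<and> degree v = i \<and>
        (\<forall>x\<in>X. \<forall>y\<in>X. nn * projF X i x y = poly v (nn * projF X 1 x y)))" for i
  have V: "degree (V i) = i \<and> (\<forall>x\<in>X. \<forall>y\<in>X. nn * FF i x y = poly (V i) (x \<bullet> y))" if i: "i \<le> s" for i
  proof -
    have "V i \<noteq> 0 \<and> degree (V i) = i \<and>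
        (\<forall>x\<in>X. \<forall>y\<in>X. nn * projF X i x y = poly (V i) (nn * projF X 1 x y))"
      unfolding V_def by (rule someI_ex) (use ex i in blast)
    thus ?thesis using FF1 unfolding projF_eq by auto
  qed
  define w where "w = (\<Sum>i\<le>s - 1. V i)"
  have dw: "degree w \<le> s - 1" unfolding w_def
    by (intro degree_sum_le) (use V s_ge1 in auto)
  have Pw: "nn * Pm x y = poly w (x \<bullet> y)" if x: "x \<in> X" and y: "y \<in> X" for x y
  proof -
    have "nn * Pm x y = (\<Sum>i\<le>s - 1. nn * FF i x y)" unfolding Pk_tel by (simp add: sum_distrib_left)
    also have "\<dots> = (\<Sum>i\<le>s - 1. poly (V i) (x \<bullet> y))" using V x y by (intro sum.cong refl) auto
    finally show ?thesis unfolding w_def poly_sum .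
  qed
  have T1: "TT = poly w (real CARD('m))"
  proof -
    have "TT = (\<Sum>x\<in>X. poly w (real CARD('m)) / nn)"
      unfolding TT_def using Pw inner_self nn_pos by (intro sum.cong refl) (auto simp: field_simps)
    thus ?thesis using nn_pos by simp
  qed
  have T2: "ipf (poly w) (poly w) = TT"
  proof -
    have "ipf (poly w) (poly w) = (\<Sum>x\<in>X. \<Sum>y\<in>X. (nn * Pm x y) * (nn * Pm x y)) / nn\<^sup>2"
      unfolding ipf_def using Pw by (intro arg_cong2[where f="(/)"] sum.cong refl) auto
    also have "\<dots> = (\<Sum>x\<in>X. \<Sum>y\<in>X. Pm x y * Pm x y)"
      using nn_pos by (simp add: power2_eq_square algebra_simps sum_distrib_left[symmetric])
    also have "\<dots> = TT" unfolding TT_def using Pk_sq by simp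
    finally show ?thesis .
  qed
  have T3: "ipf (poly Kp) (poly w) = TT" using Kp_repr[OF dw] T1 by (simp add: ipf_comm)
  have T4: "ipf (poly Kp) (poly Kp) = poly Kp (real CARD('m))" by (rule Kp_repr[OF Kp_deg])
  have "0 \<le> ipf (\<lambda>t. poly Kp t - poly w t) (\<lambda>t. poly Kp t - poly w t)" by (rule ipf_self_nonneg)
  hence "TT \<le> poly Kp (real CARD('m))" unfolding ipf_diff_sq T2 T3 T4 by simp
  thus ?thesis using TT_ge by simp
qed

definition comb :: "(nat \<Rightarrow> real) \<Rightarrow> real^'m \<Rightarrow> real^'m \<Rightarrow> real" where
  "comb c = (\<lambda>x y. \<Sum>i\<le>s. c i * FF i x y)"

lemma adj_sum: "(\<Sum>\<alpha>\<in>inner_set' X. c \<alpha> * adjX X \<alpha> x y) = (if x \<in> X \<and> y \<in> X then c (x \<bullet> y) else 0)"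
proof (cases "x \<in> X \<and> y \<in> X")
  case True
  have "(\<Sum>\<alpha>\<in>inner_set' X. c \<alpha> * adjX X \<alpha> x y) = (\<Sum>\<alpha>\<in>inner_set' X. if \<alpha> = x \<bullet> y then c (x \<bullet> y) else 0)"
    using True by (intro sum.cong refl) (auto simp: adjX_def)
  thus ?thesis using True inner_in fin_A' by simp
next
  case False
  hence "\<And>\<alpha>. adjX X \<alpha> x y = 0" by (auto simp: adjX_def)
  thus ?thesis using False by auto
qed

lemma BM_iff: "M \<in> bose_mesner X \<longleftrightarrow> (\<exists>\<phi>. \<forall>x y. M x y = (if x \<in> X \<and> y \<in> X then \<phi> (x \<bullet> y) else 0))"
  unfolding bose_mesner_def adj_sum by blast

lemma FF_mult: "mat_mult X (FF i) (FF k) x y = (if i = k then FF i x y else 0)"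
proof (cases "x \<in> X \<and> y \<in> X")
  case False
  hence "mat_mult X (FF i) (FF k) x y = 0"
    using FF_mat[of i] FF_mat[of k] unfolding mat_mult_def is_matX_def by (auto intro!: sum.neutral)
  moreover have "FF i x y = 0" using False FF_mat[of i] unfolding is_matX_def by auto
  ultimately show ?thesis by (cases "i = k") simp_all
next
  case True
  hence x: "x \<in> X" and y: "y \<in> X" by auto
  define col where "col = mat_app X (FF k) (delta X y)"
  have colv: "z \<in> X \<Longrightarrow> col z = FF k z y" for z unfolding col_def using mat_app_delta[OF fin y] by simp
  have "mat_mult X (FF i) (FF k) x y = mat_app X (FF i) col x"
    unfolding mat_mult_def mat_app_def using x colv by (auto intro!: sum.cong)
  moreover have H: "col \<in> HarmX X k" unfolding col_def using FF_isproj[of k] delta_CX unfolding isproj_def by blast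
  have colC: "col \<in> CX X" unfolding col_def by (rule mat_app_CX)
  have colP: "col \<in> PolX X k" using H unfolding HarmX_def by (auto split: if_splits)
  have colO: "\<And>g. 0 < k \<Longrightarrow> g \<in> PolX X (k - 1) \<Longrightarrow> dotX X col g = 0"
    using H nn_pos unfolding HarmX_def ipX_dot by auto
  have "mat_app X (FF i) col = (if i = k then col else (\<lambda>x. 0))"
  proof (cases "i = k")
    case True thus ?thesis using FF_fix[OF colP colO] by simp
  next
    case False
    show ?thesis
    proof (cases "i < k")
      case True
      have "mat_app X (FF i) col = (\<lambda>x. 0)"
      proof (rule FF_kill_high[OF colC])
        fix h assume "h \<in> PolX X i"
        moreover have "i \<le> k - 1" using True by simp
        ultimately have "h \<in> PolX X (k - 1)" using PolX_mono[of i "k - 1" X] by blast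
        thus "dotX X col h = 0" using colO True by simp
      qed
      thus ?thesis using False by simp
    next
      case False2: False
      hence "k < i" using False by simp
      hence "k \<le> i - 1" by simp
      hence "col \<in> PolX X (i - 1)" using colP PolX_mono[of k "i - 1" X] by blast
      thus ?thesis using FF_kill_low[of i col] \<open>k < i\<close> False by simp
    qed
  qed
  ultimately show ?thesis using x colv by simp
qed

lemma comb_mult: "mat_mult X (comb a) (comb b) = comb (\<lambda>i. a i * b i)"
proof (intro ext)
  fix x y
  have "mat_mult X (comb a) (comb b) x y = (\<Sum>z\<in>X. (\<Sum>i\<le>s. a i * FF i x z) * (\<Sum>k\<le>s. b k * FF k z y))"
    unfolding mat_mult_def comb_def ..
  also have "\<dots> = (\<Sum>z\<in>X. \<Sum>i\<le>s. \<Sum>k\<le>s. a i * b k * (FF i x z * FF k z y))"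
    by (simp add: sum_product algebra_simps)
  also have "\<dots> = (\<Sum>i\<le>s. \<Sum>z\<in>X. \<Sum>k\<le>s. a i * b k * (FF i x z * FF k z y))" by (rule sum.swap)
  also have "\<dots> = (\<Sum>i\<le>s. \<Sum>k\<le>s. \<Sum>z\<in>X. a i * b k * (FF i x z * FF k z y))"
    by (intro sum.cong refl sum.swap)
  also have "\<dots> = (\<Sum>i\<le>s. \<Sum>k\<le>s. a i * b k * mat_mult X (FF i) (FF k) x y)"
    unfolding mat_mult_def by (simp add: sum_distrib_left)
  also have "\<dots> = (\<Sum>i\<le>s. \<Sum>k\<le>s. if k = i then a i * b i * FF i x y else 0)"
    unfolding FF_mult by (intro sum.cong refl) auto
  also have "\<dots> = comb (\<lambda>i. a i * b i) x y" unfolding comb_def by simp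
  finally show "mat_mult X (comb a) (comb b) x y = comb (\<lambda>i. a i * b i) x y" .
qed

lemma comb_add: "(\<lambda>x y. comb a x y + comb b x y) = comb (\<lambda>i. a i + b i)"
  unfolding comb_def by (simp add: algebra_simps sum.distrib)

lemma comb_delta: "i \<le> s \<Longrightarrow> comb (\<lambda>k. if k = i then 1 else 0) = FF i"
proof (intro ext)
  fix x y assume i: "i \<le> s"
  have "(\<Sum>k\<le>s. (if k = i then 1 else 0) * FF k x y) = (\<Sum>k\<le>s. if k = i then FF i x y else 0)"
    by (intro sum.cong) auto
  thus "comb (\<lambda>k. if k = i then 1 else 0) x y = FF i x y" using i unfolding comb_def by simp
qed

lemma comb_BM: "(\<forall>j\<le>s. \<forall>x\<in>X. \<forall>y\<in>X. nn * FF j x y = poly (q j) (x \<bullet> y)) \<Longrightarrow> comb c \<in> bose_mesner X"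
  unfolding BM_iff
proof (rule exI[of _ "\<lambda>t. (\<Sum>i\<le>s. c i * poly (q i) t) / nn"], intro allI)
  fix x y assume allF: "\<forall>j\<le>s. \<forall>x\<in>X. \<forall>y\<in>X. nn * FF j x y = poly (q j) (x \<bullet> y)"
  show "comb c x y = (if x \<in> X \<and> y \<in> X then (\<Sum>i\<le>s. c i * poly (q i) (x \<bullet> y)) / nn else 0)"
  proof (cases "x \<in> X \<and> y \<in> X")
    case True
    have "comb c x y = (\<Sum>i\<le>s. c i * poly (q i) (x \<bullet> y) / nn)"
      unfolding comb_def
    proof (intro sum.cong refl)
      fix i assume "i \<in> {..s}"
      hence "nn * FF i x y = poly (q i) (x \<bullet> y)" using allF True by auto
      thus "c i * FF i x y = c i * poly (q i) (x \<bullet> y) / nn" using nn_pos by (simp add: field_simps)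
    qed
    thus ?thesis using True by (simp add: sum_divide_distrib)
  next
    case False thus ?thesis using FF_mat unfolding comb_def is_matX_def by auto
  qed
qed

end


context sdesq begin

context
  assumes allF: "\<forall>j\<le>s. \<forall>x\<in>X. \<forall>y\<in>X. nn * FF j x y = poly (q j) (x \<bullet> y)"
begin

lemma FF_nz: "i \<le> s \<Longrightarrow> \<not> zero_matX X (FF i)"
proof
  assume i: "i \<le> s" and z: "zero_matX X (FF i)"
  obtain \<alpha> where a: "\<alpha> \<in> inner_set' X" "poly (q i) \<alpha> \<noteq> 0"
    using poly_nonvanish[OF q_nz[OF i]] q_deg[OF i] i by auto
  obtain x y where xy: "x \<in> X" "y \<in> X" "x \<bullet> y = \<alpha>"
    using a(1) ne inner_self unfolding inner_set'_def inner_set_def by auto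
  have "nn * FF i x y = poly (q i) \<alpha>" using allF i xy by auto
  moreover have "FF i x y = 0" using z xy unfolding zero_matX_def by auto
  ultimately show False using a by simp
qed

lemma BM_comb: "M \<in> bose_mesner X \<Longrightarrow> \<exists>c. M = comb c"
proof -
  assume "M \<in> bose_mesner X"
  then obtain \<phi> where phi: "\<And>x y. M x y = (if x \<in> X \<and> y \<in> X then \<phi> (x \<bullet> y) else 0)"
    unfolding BM_iff by blast
  obtain e where e: "\<forall>\<alpha>\<in>inner_set' X. \<phi> \<alpha> = (\<Sum>i\<le>s. e i * poly (q i) \<alpha>)" using expand_fun by blast
  have "M = comb (\<lambda>i. nn * e i)"
  proof (intro ext)
    fix x y
    show "M x y = comb (\<lambda>i. nn * e i) x y"
    proof (cases "x \<in> X \<and> y \<in> X")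
      case True
      have "M x y = (\<Sum>i\<le>s. e i * poly (q i) (x \<bullet> y))" using phi e True inner_in by simp
      also have "\<dots> = comb (\<lambda>i. nn * e i) x y" unfolding comb_def
        using allF True by (intro sum.cong refl) (auto simp: algebra_simps)
      finally show ?thesis .
    next
      case False thus ?thesis using phi FF_mat unfolding comb_def is_matX_def by auto
    qed
  qed
  thus ?thesis by blast
qed

lemma comb_single: "j \<le> s \<Longrightarrow> comb (\<lambda>i. c i * (if i = j then 1 else 0)) x y = c j * FF j x y"
proof -
  assume j: "j \<le> s"
  have "comb (\<lambda>i. c i * (if i = j then 1 else 0)) x y = (\<Sum>i\<le>s. if i = j then c j * FF j x y else 0)"
    unfolding comb_def by (intro sum.cong) auto
  thus ?thesis using j by simp
qed

lemma comb_zero_iff: "zero_matX X (comb c) \<longleftrightarrow> (\<forall>i\<le>s. c i = 0)"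
proof
  assume z: "zero_matX X (comb c)"
  show "\<forall>i\<le>s. c i = 0"
  proof (intro allI impI)
    fix j assume j: "j \<le> s"
    have "\<forall>x\<in>X. \<forall>y\<in>X. c j * FF j x y = 0"
    proof (intro ballI)
      fix x y assume x: "x \<in> X" and y: "y \<in> X"
      have "mat_mult X (comb c) (comb (\<lambda>k. if k = j then 1 else 0)) x y = 0"
        unfolding mat_mult_def using z x unfolding zero_matX_def by simp
      thus "c j * FF j x y = 0" unfolding comb_mult comb_single[OF j] .
    qed
    thus "c j = 0" using FF_nz[OF j] unfolding zero_matX_def by auto
  qed
next
  assume "\<forall>i\<le>s. c i = 0"
  thus "zero_matX X (comb c)" unfolding zero_matX_def comb_def by simp
qed

lemma comb_eq_iff: "comb a = comb b \<longleftrightarrow> (\<forall>i\<le>s. a i = b i)"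
proof
  assume e: "comb a = comb b"
  have "zero_matX X (comb (\<lambda>i. a i - b i))"
    unfolding zero_matX_def
  proof (intro ballI)
    fix x y
    have "comb (\<lambda>i. a i - b i) x y = comb a x y - comb b x y"
      unfolding comb_def by (simp add: algebra_simps sum_subtractf)
    thus "comb (\<lambda>i. a i - b i) x y = 0" using e by simp
  qed
  thus "\<forall>i\<le>s. a i = b i" unfolding comb_zero_iff by simp
next
  assume "\<forall>i\<le>s. a i = b i"
  thus "comb a = comb b" unfolding comb_def by (intro ext sum.cong) auto
qed

lemma idem_iff: "idempotent_BM X E \<longleftrightarrow> (\<exists>c. E = comb c \<and> (\<forall>i\<le>s. c i = 0 \<or> c i = 1) \<and> (\<exists>i\<le>s. c i = 1))"
proof
  assume E: "idempotent_BM X E"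
  then obtain c where c: "E = comb c" using BM_comb unfolding idempotent_BM_def by blast
  have "comb (\<lambda>i. c i * c i) = comb c" using E c comb_mult unfolding idempotent_BM_def by simp
  hence cc: "\<forall>i\<le>s. c i * c i = c i" unfolding comb_eq_iff .
  hence c01: "\<forall>i\<le>s. c i = 0 \<or> c i = 1" by (metis mult_cancel_right1 mult_zero_left)
  have "\<not> (\<forall>i\<le>s. c i = 0)" using E c comb_zero_iff unfolding idempotent_BM_def by blast
  then obtain i where "i \<le> s" "c i \<noteq> 0" by blast
  thus "\<exists>c. E = comb c \<and> (\<forall>i\<le>s. c i = 0 \<or> c i = 1) \<and> (\<exists>i\<le>s. c i = 1)"
    using c c01 by blast
next
  assume "\<exists>c. E = comb c \<and> (\<forall>i\<le>s. c i = 0 \<or> c i = 1) \<and> (\<exists>i\<le>s. c i = 1)"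
  then obtain c i where c: "E = comb c" "\<forall>i\<le>s. c i = 0 \<or> c i = 1" and i: "i \<le> s" "c i = 1" by blast
  have "E \<in> bose_mesner X" unfolding c by (rule comb_BM[OF allF])
  moreover have "\<not> zero_matX X E" unfolding c comb_zero_iff using i by auto
  moreover have "mat_mult X E E = E"
    unfolding c comb_mult comb_eq_iff using c(2) by auto
  ultimately show "idempotent_BM X E" unfolding idempotent_BM_def by blast
qed

lemma delta_idem: "i \<le> s \<Longrightarrow> idempotent_BM X (FF i)"
  unfolding idem_iff by (rule exI[of _ "\<lambda>k. if k = i then 1 else 0"]) (auto simp: comb_delta)

lemma prim_FF: assumes i: "i \<le> s" shows "primitive_idempotent X (FF i)"
  unfolding primitive_idempotent_def
proof (intro conjI notI)
  show "idempotent_BM X (FF i)" by (rule delta_idem[OF i])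
  assume "\<exists>E1 E2. idempotent_BM X E1 \<and> idempotent_BM X E2 \<and> zero_matX X (mat_mult X E1 E2) \<and>
           FF i = (\<lambda>x y. E1 x y + E2 x y)"
  then obtain E1 E2 where E: "idempotent_BM X E1" "idempotent_BM X E2" "FF i = (\<lambda>x y. E1 x y + E2 x y)" by blast
  obtain a where a: "E1 = comb a" "\<forall>k\<le>s. a k = 0 \<or> a k = 1" "\<exists>k\<le>s. a k = 1" using E(1) idem_iff by blast
  obtain b where b: "E2 = comb b" "\<forall>k\<le>s. b k = 0 \<or> b k = 1" "\<exists>k\<le>s. b k = 1" using E(2) idem_iff by blast
  have "comb (\<lambda>k. if k = i then 1 else 0) = comb (\<lambda>k. a k + b k)"
    using E(3) comb_delta[OF i] comb_add[of a b] a(1) b(1) by simp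
  hence ab: "\<forall>k\<le>s. (if k = i then 1 else 0) = a k + b k" unfolding comb_eq_iff .
  obtain k where k: "k \<le> s" "a k = 1" using a(3) by blast
  obtain k' where k': "k' \<le> s" "b k' = 1" using b(3) by blast
  have "k = i" using ab k b(2) by (metis add_cancel_right_right one_neq_zero zero_neq_one add_nonneg_eq_0_iff zero_le_one order_refl)
  moreover have "k' = i" using ab k' a(2) by (metis add_cancel_left_left one_neq_zero add_nonneg_eq_0_iff zero_le_one order_refl)
  ultimately show False using ab k k' by force
qed

lemma prim_is_FF: assumes P: "primitive_idempotent X E" shows "\<exists>i\<le>s. E = FF i"
proof -
  have E: "idempotent_BM X E" using P unfolding primitive_idempotent_def by blast
  obtain c i where c: "E = comb c" "\<forall>k\<le>s. c k = 0 \<or> c k = 1" and i: "i \<le> s" "c i = 1"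
    using E idem_iff by blast
  have "\<forall>k\<le>s. k \<noteq> i \<longrightarrow> c k = 0"
  proof (rule ccontr)
    assume "\<not> ?thesis"
    then obtain k where k: "k \<le> s" "k \<noteq> i" "c k = 1" using c(2) by blast
    define E1 where "E1 = comb (\<lambda>j. if j = i then 1 else 0)"
    define E2 where "E2 = comb (c(i := 0))"
    have I1: "idempotent_BM X E1" unfolding E1_def idem_iff using i by (intro exI[of _ "\<lambda>j. if j = i then 1 else 0"]) auto
    have I2: "idempotent_BM X E2" unfolding E2_def idem_iff using c(2) k by (intro exI[of _ "c(i := 0)"]) auto
    have Z: "zero_matX X (mat_mult X E1 E2)" unfolding E1_def E2_def comb_mult comb_zero_iff by simp
    have S: "E = (\<lambda>x y. E1 x y + E2 x y)"
      unfolding E1_def E2_def comb_add c(1) comb_eq_iff using i by auto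
    show False using P I1 I2 Z S unfolding primitive_idempotent_def by blast
  qed
  hence "E = comb (\<lambda>j. if j = i then 1 else 0)" unfolding c(1) comb_eq_iff using i by auto
  thus ?thesis using comb_delta[OF i(1)] i by auto
qed

lemma scheme: "Q_polynomial_scheme X s"
  unfolding Q_polynomial_scheme_def
proof (intro conjI)
  show "sym_assoc_scheme X"
    unfolding sym_assoc_scheme_def
  proof (intro conjI ballI allI)
    fix x y
    show "adjX X (real CARD('m)) x y = (if x \<in> X \<and> y \<in> X \<and> x = y then 1 else 0)"
      unfolding adjX_def using inner_eq_mm by auto
  next
    fix \<alpha> assume "\<alpha> \<in> inner_set' X"
    thus "\<exists>x\<in>X. \<exists>y\<in>X. x \<bullet> y = \<alpha>"
      using ne inner_self unfolding inner_set'_def inner_set_def by auto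
  next
    fix x y assume "x \<in> X" "y \<in> X"
    thus "\<exists>!\<alpha>. \<alpha> \<in> inner_set' X \<and> x \<bullet> y = \<alpha>" using inner_in by auto
  next
    fix \<alpha> x y show "adjX X \<alpha> x y = adjX X \<alpha> y x" unfolding adjX_def by (auto simp: inner_commute)
  next
    fix \<alpha> \<beta> assume "\<alpha> \<in> inner_set' X" "\<beta> \<in> inner_set' X"
    have A: "adjX X \<gamma> \<in> bose_mesner X" for \<gamma>
      unfolding BM_iff by (rule exI[of _ "\<lambda>t. if t = \<gamma> then 1 else 0"]) (auto simp: adjX_def)
    obtain a where a: "adjX X \<alpha> = comb a" using BM_comb[OF A] by blast
    obtain b where b: "adjX X \<beta> = comb b" using BM_comb[OF A] by blast
    show "mat_mult X (adjX X \<alpha>) (adjX X \<beta>) \<in> bose_mesner X"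
      unfolding a b comb_mult by (rule comb_BM[OF allF])
  qed
next
  show "{projF X i |i. i \<le> s} = {E. primitive_idempotent X E}"
  proof (intro equalityI subsetI)
    fix E assume "E \<in> {projF X i |i. i \<le> s}"
    then obtain i where "i \<le> s" "E = FF i" unfolding projF_eq by blast
    thus "E \<in> {E. primitive_idempotent X E}" using prim_FF by blast
  next
    fix E assume "E \<in> {E. primitive_idempotent X E}"
    then obtain i where "i \<le> s" "E = FF i" using prim_is_FF by blast
    thus "E \<in> {projF X i |i. i \<le> s}" unfolding projF_eq by blast
  qed
next
  show "\<forall>i\<le>s. \<exists>v. v \<noteq> 0 \<and> degree v = i \<and>
      (\<forall>x\<in>X. \<forall>y\<in>X. real (card X) * projF X i x y = poly v (real (card X) * projF X 1 x y))"
  proof (intro allI impI)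
    fix i assume i: "i \<le> s"
    show "\<exists>v. v \<noteq> 0 \<and> degree v = i \<and>
      (\<forall>x\<in>X. \<forall>y\<in>X. real (card X) * projF X i x y = poly v (real (card X) * projF X 1 x y))"
      by (rule exI[of _ "q i"]) (use i q_nz q_deg allF FF1 in \<open>auto simp: projF_eq\<close>)
  qed
qed

end

lemma main_iff: "traceX X (projF X s) = poly (q s) (real CARD('m)) \<longleftrightarrow> Q_polynomial_scheme X s"
proof
  assume "traceX X (projF X s) = poly (q s) (real CARD('m))"
  hence "\<forall>x\<in>X. \<forall>y\<in>X. nn * Pm x y = poly Kp (x \<bullet> y)" unfolding main_eq_iff TT_eq_iff .
  hence "\<forall>j\<le>s. \<forall>x\<in>X. \<forall>y\<in>X. nn * FF j x y = poly (q j) (x \<bullet> y)" using all_FF by blast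
  thus "Q_polynomial_scheme X s" by (rule scheme)
next
  assume "Q_polynomial_scheme X s"
  thus "traceX X (projF X s) = poly (q s) (real CARD('m))" unfolding main_eq_iff by (rule QPS_imp_eq)
qed

end


lemma nonempty_from_pq:
  fixes X :: "(real^'m) set"
  assumes "card (inner_set X) = s" "predegree_polys X s q" shows "X \<noteq> {}"
proof
  assume X: "X = {}"
  hence s0: "s = 0" using assms(1) unfolding inner_set_def by simp
  have q0: "q 0 \<noteq> 0" "degree (q 0) = 0" and
    ip: "pred_ip X (q 0) (q 0) = poly (q 0) (real CARD('m))"
    using assms(2) s0 unfolding predegree_polys_def by auto
  have "pred_ip X (q 0) (q 0) = 0" unfolding pred_ip_def X by simp
  hence "poly (q 0) (real CARD('m)) = 0" using ip by simp
  moreover have "poly (q 0) (real CARD('m)) = coeff (q 0) 0" using poly_upto[of "q 0" 0] q0 by simp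
  moreover have "coeff (q 0) 0 \<noteq> 0" using q0 leading_coeff_0_iff[of "q 0"] by simp
  ultimately show False by simp
qed

theorem theorem4p1:
  fixes X :: "(real^'m) set" and s :: nat and q :: "nat \<Rightarrow> real poly"
  assumes "finite X"
    and "\<forall>x\<in>X. x \<bullet> x = real CARD('m)"
    and "spherical_2_design X"
    and "card (inner_set X) = s"
    and "design_degree X = s"
    and "predegree_polys X s q"
  shows "traceX X (projF X s) = (\<Sum>x\<in>X. real (card X) * projF X s x x) / real (card X)
       \<and> traceX X (projF X s) \<le> poly (q s) (real CARD('m))
       \<and> (traceX X (projF X s) = poly (q s) (real CARD('m)) \<longleftrightarrow> Q_polynomial_scheme X s)"
proof -
  have ne: "X \<noteq> {}" by (rule nonempty_from_pq[OF assms(4,6)])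
  interpret sdesq X s q
    by unfold_locales (use assms ne in auto)
  have "traceX X (projF X s) = (\<Sum>x\<in>X. real (card X) * projF X s x x) / real (card X)"
    unfolding traceX_def using nn_pos by (simp add: sum_distrib_left[symmetric])
  thus ?thesis using main_ineq main_iff by blast
qed


end
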